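(* Let $\mathcal{H}$ be a Hilbert space, $\Lambda$ an index set, $q=\{q_{\alpha\beta}\in\mathbb{T}:\alpha\ne\beta\in\Lambda\}$ with $q_{\alpha\beta}=q_{\beta\alpha}^{-1}$, and $\{V_\alpha:\alpha\in\Lambda\}$ a family of isometries on $\mathcal{H}$ with $V_\alpha V_\beta=q_{\alpha\beta}V_\beta V_\alpha$ for all $\alpha\ne\beta$. Then there exist a Hilbert space $\mathcal{K}\supseteq\mathcal{H}$ and unitaries $\{U_\alpha:\alpha\in\Lambda\}$ on $\mathcal{K}$ with $U_\alpha U_\beta=q_{\alpha\beta}U_\beta U_\alpha$ for all $\alpha\ne\beta$ such that $V_\alpha=U_\alpha|_{\mathcal{H}}$ for every $\alpha\in\Lambda$. *)

theory Defs
  imports Complex_Main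
begin

text \<open>A complex Hilbert space presented concretely: a carrier set inside some
ambient type together with its vector-space operations and inner product
(linear in the first argument, conjugate-linear in the second).\<close>

record 'a hspace =
  hcarrier :: "'a set"
  hadd :: "'a \<Rightarrow> 'a \<Rightarrow> 'a"
  hscale :: "complex \<Rightarrow> 'a \<Rightarrow> 'a"
  hzero :: 'a
  hinner :: "'a \<Rightarrow> 'a \<Rightarrow> complex"

definition hdiff :: "'a hspace \<Rightarrow> 'a \<Rightarrow> 'a \<Rightarrow> 'a" where
  "hdiff H x y = hadd H x (hscale H (-1) y)"

definition hnorm :: "'a hspace \<Rightarrow> 'a \<Rightarrow> real" where
  "hnorm H x = sqrt (Re (hinner H x x))"

definition is_chilbert :: "'a hspace \<Rightarrow> bool" where
  "is_chilbert H \<longleftrightarrow>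
     (let S = hcarrier H; add = hadd H; sc = hscale H; z = hzero H; ip = hinner H in
      z \<in> S \<and>
      (\<forall>x\<in>S. \<forall>y\<in>S. add x y \<in> S) \<and>
      (\<forall>a. \<forall>x\<in>S. sc a x \<in> S) \<and>
      (\<forall>x\<in>S. \<forall>y\<in>S. \<forall>w\<in>S. add (add x y) w = add x (add y w)) \<and>
      (\<forall>x\<in>S. \<forall>y\<in>S. add x y = add y x) \<and>
      (\<forall>x\<in>S. add z x = x) \<and>
      (\<forall>x\<in>S. \<exists>y\<in>S. add x y = z) \<and>
      (\<forall>a. \<forall>x\<in>S. \<forall>y\<in>S. sc a (add x y) = add (sc a x) (sc a y)) \<and>
      (\<forall>a b. \<forall>x\<in>S. sc (a + b) x = add (sc a x) (sc b x)) \<and>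
      (\<forall>a b. \<forall>x\<in>S. sc a (sc b x) = sc (a * b) x) \<and>
      (\<forall>x\<in>S. sc 1 x = x) \<and>
      (\<forall>x\<in>S. \<forall>y\<in>S. ip x y = cnj (ip y x)) \<and>
      (\<forall>x\<in>S. \<forall>y\<in>S. \<forall>w\<in>S. ip (add x y) w = ip x w + ip y w) \<and>
      (\<forall>a. \<forall>x\<in>S. \<forall>y\<in>S. ip (sc a x) y = a * ip x y) \<and>
      (\<forall>x\<in>S. Re (ip x x) \<ge> 0) \<and>
      (\<forall>x\<in>S. ip x x = 0 \<longrightarrow> x = z) \<and>
      \<comment> \<open>completeness with respect to the induced norm\<close>
      (\<forall>f::nat \<Rightarrow> 'a. (\<forall>n. f n \<in> S) \<longrightarrow>
         (\<forall>e>0. \<exists>N. \<forall>m\<ge>N. \<forall>n\<ge>N. hnorm H (hdiff H (f m) (f n)) < e) \<longrightarrow>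
         (\<exists>x\<in>S. (\<lambda>n. hnorm H (hdiff H (f n) x)) \<longlonglongrightarrow> 0)))"

definition hlinear :: "'a hspace \<Rightarrow> 'b hspace \<Rightarrow> ('a \<Rightarrow> 'b) \<Rightarrow> bool" where
  "hlinear H K T \<longleftrightarrow>
     (\<forall>x\<in>hcarrier H. T x \<in> hcarrier K) \<and>
     (\<forall>x\<in>hcarrier H. \<forall>y\<in>hcarrier H. T (hadd H x y) = hadd K (T x) (T y)) \<and>
     (\<forall>a. \<forall>x\<in>hcarrier H. T (hscale H a x) = hscale K a (T x))"

definition hisometry_map :: "'a hspace \<Rightarrow> 'b hspace \<Rightarrow> ('a \<Rightarrow> 'b) \<Rightarrow> bool" where
  "hisometry_map H K T \<longleftrightarrow> hlinear H K T \<and>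
     (\<forall>x\<in>hcarrier H. hnorm K (T x) = hnorm H x)"

definition hisometry :: "'a hspace \<Rightarrow> ('a \<Rightarrow> 'a) \<Rightarrow> bool" where
  "hisometry H V \<longleftrightarrow> hisometry_map H H V"

definition hunitary :: "'a hspace \<Rightarrow> ('a \<Rightarrow> 'a) \<Rightarrow> bool" where
  "hunitary H U \<longleftrightarrow> hisometry_map H H U \<and> U ` hcarrier H = hcarrier H"

end

theory Submission
  imports Defs "HOL-Library.Function_Algebras"
begin

lemma cmod_sq': "cmod c * cmod c = Re c * Re c + Im c * Im c"
  by (metis cmod_power2 power2_eq_square)

locale preH =
  fixes S :: "'d set" and ad :: "'d \<Rightarrow> 'd \<Rightarrow> 'd" and sc :: "complex \<Rightarrow> 'd \<Rightarrow> 'd"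
    and zr :: 'd and ip :: "'d \<Rightarrow> 'd \<Rightarrow> complex"
  assumes zr_in: "zr \<in> S"
    and ad_in: "x \<in> S \<Longrightarrow> y \<in> S \<Longrightarrow> ad x y \<in> S"
    and sc_in: "x \<in> S \<Longrightarrow> sc a x \<in> S"
    and ip_add: "x \<in> S \<Longrightarrow> y \<in> S \<Longrightarrow> w \<in> S \<Longrightarrow> ip (ad x y) w = ip x w + ip y w"
    and ip_sc: "x \<in> S \<Longrightarrow> y \<in> S \<Longrightarrow> ip (sc a x) y = a * ip x y"
    and ip_sym: "x \<in> S \<Longrightarrow> y \<in> S \<Longrightarrow> ip x y = cnj (ip y x)"
    and ip_pos: "x \<in> S \<Longrightarrow> 0 \<le> Re (ip x x)"
    and ip_zr: "x \<in> S \<Longrightarrow> ip zr x = 0"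
begin

definition dif :: "'d \<Rightarrow> 'd \<Rightarrow> 'd" where "dif x y = ad x (sc (-1) y)"
definition nrm :: "'d \<Rightarrow> real" where "nrm x = sqrt (Re (ip x x))"

lemma dif_in: "x \<in> S \<Longrightarrow> y \<in> S \<Longrightarrow> dif x y \<in> S"
  by (simp add: dif_def ad_in sc_in)

lemma ip_add2: "x \<in> S \<Longrightarrow> y \<in> S \<Longrightarrow> w \<in> S \<Longrightarrow> ip w (ad x y) = ip w x + ip w y"
  by (metis ad_in complex_cnj_add ip_add ip_sym)

lemma ip_sc2: "x \<in> S \<Longrightarrow> y \<in> S \<Longrightarrow> ip y (sc a x) = cnj a * ip y x"
  by (metis complex_cnj_mult ip_sc ip_sym sc_in)

lemma ip_zr2: "x \<in> S \<Longrightarrow> ip x zr = 0"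
  by (metis complex_cnj_zero ip_sym ip_zr zr_in)

lemma ip_dif: "x \<in> S \<Longrightarrow> y \<in> S \<Longrightarrow> w \<in> S \<Longrightarrow> ip (dif x y) w = ip x w - ip y w"
  by (simp add: dif_def ip_add ip_sc sc_in)

lemma ip_dif2: "x \<in> S \<Longrightarrow> y \<in> S \<Longrightarrow> w \<in> S \<Longrightarrow> ip w (dif x y) = ip w x - ip w y"
  by (simp add: dif_def ip_add2 ip_sc2 sc_in)

lemmas ip_simps = ip_add ip_add2 ip_sc ip_sc2 ip_dif ip_dif2 ip_zr ip_zr2 ad_in sc_in dif_in zr_in

lemma ip_real: "x \<in> S \<Longrightarrow> Im (ip x x) = 0"
  using ip_sym[of x x] by (metis cnj.simps(2) neg_equal_zero)

lemma ip_self: "x \<in> S \<Longrightarrow> ip x x = complex_of_real (Re (ip x x))"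
  using ip_real by (simp add: complex_eq_iff)

lemma nrm_sq: "x \<in> S \<Longrightarrow> (nrm x)^2 = Re (ip x x)"
  by (simp add: nrm_def ip_pos)

lemma nrm_ge0: "x \<in> S \<Longrightarrow> 0 \<le> nrm x" by (simp add: nrm_def ip_pos)

lemma cs_ineq:
  assumes x: "x \<in> S" and y: "y \<in> S"
  shows "(cmod (ip x y))^2 \<le> Re (ip x x) * Re (ip y y)"
proof -
  define A where "A = Re (ip x x)"
  define B where "B = Re (ip y y)"
  define c where "c = ip x y"
  have A0: "A \<ge> 0" "B \<ge> 0" using ip_pos x y by (auto simp: A_def B_def)
  have cc: "(cmod c)^2 = Re c * Re c + Im c * Im c" by (simp add: cmod_sq' power2_eq_square)
  have key0: "0 \<le> A - 2 * s * (Re c * Re c + Im c * Im c) + s^2 * (Re c * Re c + Im c * Im c) * B" for s :: real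
  proof -
    define t where "t = complex_of_real s * c"
    have "0 \<le> Re (ip (dif x (sc t y)) (dif x (sc t y)))"
      using x y by (intro ip_pos) (simp add: ip_simps)
    also have "ip (dif x (sc t y)) (dif x (sc t y)) = ip x x - cnj t * ip x y - t * ip y x + t * cnj t * ip y y"
      using x y by (simp add: ip_simps algebra_simps)
    also have "ip y x = cnj c" using ip_sym[OF y x] c_def by simp
    finally have "0 \<le> Re (ip x x - cnj t * c - t * cnj c + t * cnj t * ip y y)" by (simp add: c_def)
    also have "\<dots> = A - 2 * s * (Re c * Re c + Im c * Im c) + s^2 * (Re c * Re c + Im c * Im c) * B"
      using ip_self[OF y] unfolding A_def B_def t_def
      by (simp add: power2_eq_square algebra_simps)
    finally show ?thesis .
  qed
  have key: "0 \<le> A - 2 * s * (cmod c)^2 + s^2 * (cmod c)^2 * B" for s :: real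
    using key0[of s] cc by simp
  show ?thesis
  proof (cases "B = 0")
    case True
    show ?thesis
    proof (rule ccontr)
      assume "\<not> ?thesis"
      then have c0: "(cmod c)^2 > 0" using True c_def B_def by (auto simp: A_def)
      have "0 \<le> A - 2 * ((A+1)/(2*(cmod c)^2)) * (cmod c)^2"
        using key[of "(A+1)/(2*(cmod c)^2)"] True by simp
      also have "\<dots> = -1" using c0 by (simp add: field_simps)
      finally show False by simp
    qed
  next
    case False
    then have Bp: "B > 0" using A0 by simp
    have "0 \<le> A - 2 * (1/B) * (cmod c)^2 + (1/B)^2 * (cmod c)^2 * B" using key[of "1/B"] .
    also have "\<dots> = A - (cmod c)^2 / B" using Bp by (simp add: field_simps power2_eq_square)
    finally have "(cmod c)^2 / B \<le> A" by simp
    then have "(cmod c)^2 \<le> A * B" using Bp by (simp add: field_simps)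
    then show ?thesis by (simp add: A_def B_def c_def)
  qed
qed

lemma cs: "x \<in> S \<Longrightarrow> y \<in> S \<Longrightarrow> cmod (ip x y) \<le> nrm x * nrm y"
proof -
  assume x: "x \<in> S" and y: "y \<in> S"
  have "(cmod (ip x y))^2 \<le> (nrm x * nrm y)^2"
    using cs_ineq[OF x y] nrm_sq[OF x] nrm_sq[OF y] by (simp add: power_mult_distrib)
  then show ?thesis using nrm_ge0 x y by (meson mult_nonneg_nonneg power2_le_imp_le)
qed

lemma nrm_add: "x \<in> S \<Longrightarrow> y \<in> S \<Longrightarrow> nrm (ad x y) \<le> nrm x + nrm y"
proof -
  assume x: "x \<in> S" and y: "y \<in> S"
  have "(nrm (ad x y))^2 = Re (ip x x) + Re (ip y y) + Re (ip x y) + Re (ip y x)"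
    using x y by (simp add: nrm_sq ip_simps)
  also have "Re (ip y x) = Re (ip x y)" using ip_sym[OF y x] by simp
  also have "Re (ip x y) \<le> nrm x * nrm y" using cs[OF x y] complex_Re_le_cmod order_trans by blast
  then have "Re (ip x x) + Re (ip y y) + Re (ip x y) + Re (ip x y) \<le> (nrm x + nrm y)^2"
    using x y by (simp add: nrm_sq power2_sum)
  finally show ?thesis using nrm_ge0 x y
    by (meson add_nonneg_nonneg power2_le_imp_le)
qed

lemma nrm_cong:
  assumes "u \<in> S" "v \<in> S" "\<And>t. t \<in> S \<Longrightarrow> ip u t = ip v t"
  shows "nrm u = nrm v"
proof -
  have "ip u u = ip v u" using assms by simp
  also have "\<dots> = cnj (ip u v)" using ip_sym[OF assms(2,1)] by simp
  also have "\<dots> = cnj (ip v v)" using assms by simp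
  also have "\<dots> = ip v v" using ip_self[OF assms(2)] by (metis complex_cnj_complex_of_real)
  finally show ?thesis by (simp add: nrm_def)
qed

lemma nrm_zero_iff:
  assumes "u \<in> S" shows "nrm u = 0 \<longleftrightarrow> (\<forall>t\<in>S. ip u t = 0)"
proof
  assume "nrm u = 0"
  then show "\<forall>t\<in>S. ip u t = 0" using cs assms by (metis mult_zero_left norm_le_zero_iff)
next
  assume "\<forall>t\<in>S. ip u t = 0"
  then show "nrm u = 0" using assms by (simp add: nrm_def)
qed

lemma nrm_dif_zero:
  assumes "u \<in> S" "v \<in> S" "\<And>t. t \<in> S \<Longrightarrow> ip u t = ip v t"
  shows "nrm (dif u v) = 0"
  using assms by (simp add: nrm_zero_iff dif_in ip_dif)

lemma nrm_dif_sym: "x \<in> S \<Longrightarrow> y \<in> S \<Longrightarrow> nrm (dif x y) = nrm (dif y x)"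
proof -
  assume x: "x \<in> S" and y: "y \<in> S"
  have "nrm (dif x y) = nrm (sc (-1) (dif y x))"
    by (rule nrm_cong) (use x y in \<open>simp_all add: ip_simps\<close>)
  also have "\<dots> = nrm (dif y x)" using x y by (simp add: nrm_def ip_simps)
  finally show ?thesis .
qed

lemma nrm_dif_tri: "x \<in> S \<Longrightarrow> y \<in> S \<Longrightarrow> w \<in> S \<Longrightarrow> nrm (dif x w) \<le> nrm (dif x y) + nrm (dif y w)"
proof -
  assume x: "x \<in> S" and y: "y \<in> S" and w: "w \<in> S"
  have "nrm (dif x w) = nrm (ad (dif x y) (dif y w))"
    by (rule nrm_cong) (use x y w in \<open>simp_all add: ip_simps\<close>)
  also have "\<dots> \<le> nrm (dif x y) + nrm (dif y w)" using x y w by (simp add: nrm_add dif_in)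
  finally show ?thesis .
qed

lemma nrm_sc: "x \<in> S \<Longrightarrow> nrm (sc a x) = cmod a * nrm x"
proof -
  assume x: "x \<in> S"
  have "Re (ip (sc a x) (sc a x)) = (cmod a)^2 * Re (ip x x)"
    using x ip_self[OF x] by (simp add: ip_simps mult.assoc[symmetric] complex_mult_cnj cmod_power2 power2_eq_square cmod_sq')
  then show ?thesis by (simp add: nrm_def real_sqrt_mult)
qed

end

lemma lim_add_conv: "convergent f \<Longrightarrow> convergent g \<Longrightarrow> lim (\<lambda>n. f n + g n) = lim f + lim (g :: nat \<Rightarrow> complex)"
  by (intro limI tendsto_add) (simp_all add: convergent_LIMSEQ_iff)

lemma lim_mult_conv: "convergent f \<Longrightarrow> lim (\<lambda>n. c * f n) = c * lim (f :: nat \<Rightarrow> complex)"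
  by (intro limI tendsto_mult tendsto_const) (simp_all add: convergent_LIMSEQ_iff)

context preH begin

lemma nrm_le_tri: "x \<in> S \<Longrightarrow> y \<in> S \<Longrightarrow> nrm x \<le> nrm y + nrm (dif x y)"
proof -
  assume x: "x \<in> S" and y: "y \<in> S"
  have "nrm x = nrm (ad y (dif x y))"
    by (rule nrm_cong) (use x y in \<open>simp_all add: ip_simps\<close>)
  also have "\<dots> \<le> nrm y + nrm (dif x y)" using x y by (simp add: nrm_add dif_in)
  finally show ?thesis .
qed

definition inS :: "(nat \<Rightarrow> 'd) \<Rightarrow> bool" where "inS a \<longleftrightarrow> (\<forall>n. a n \<in> S)"

definition cs :: "(nat \<Rightarrow> 'd) \<Rightarrow> bool" where
  "cs a \<longleftrightarrow> inS a \<and> (\<forall>e>0. \<exists>N. \<forall>m\<ge>N. \<forall>n\<ge>N. nrm (dif (a m) (a n)) < e)"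

definition eqv :: "(nat \<Rightarrow> 'd) \<Rightarrow> (nat \<Rightarrow> 'd) \<Rightarrow> bool" where
  "eqv a b \<longleftrightarrow> (\<lambda>n. nrm (dif (a n) (b n))) \<longlonglongrightarrow> 0"

lemma cs_inS: "cs a \<Longrightarrow> inS a" by (simp add: cs_def)
lemma cs_in: "cs a \<Longrightarrow> a n \<in> S" by (simp add: cs_def inS_def)

lemma cs_bdd:
  assumes "cs a" shows "\<exists>B. \<forall>n. nrm (a n) \<le> B"
proof -
  obtain N where N: "\<forall>m\<ge>N. \<forall>n\<ge>N. nrm (dif (a m) (a n)) < 1"
    using assms unfolding cs_def by (meson zero_less_one)
  define B where "B = (\<Sum>i\<le>N. nrm (a i)) + 1"
  have "nrm (a n) \<le> B" for n
  proof (cases "n \<le> N")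
    case True
    have "nrm (a n) \<le> (\<Sum>i\<le>N. nrm (a i))"
      by (rule member_le_sum) (use True cs_in[OF assms] nrm_ge0 in auto)
    then show ?thesis by (simp add: B_def)
  next
    case False
    have "nrm (a n) \<le> nrm (a N) + nrm (dif (a n) (a N))"
      using nrm_le_tri cs_in[OF assms] by blast
    also have "\<dots> \<le> nrm (a N) + 1" proof -
      have "nrm (dif (a n) (a N)) < 1" using N False by auto
      then show ?thesis by simp
    qed
    also have "nrm (a N) \<le> (\<Sum>i\<le>N. nrm (a i))"
      by (rule member_le_sum) (use cs_in[OF assms] nrm_ge0 in auto)
    finally show ?thesis by (simp add: B_def)
  qed
  then show ?thesis by blast
qed

lemma cs_bdd': assumes "cs a" obtains B where "B > 0" "\<And>n. nrm (a n) \<le> B"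
proof -
  obtain B where "\<forall>n. nrm (a n) \<le> B" using cs_bdd[OF assms] by blast
  then have B: "\<And>n. nrm (a n) \<le> B" by blast
  have "0 \<le> B" using B[of 0] nrm_ge0[OF cs_in[OF assms]] by (meson order.trans)
  then show ?thesis using that[of "B+1"] B by (smt (verit))
qed

lemma ip_diff_bound:
  assumes "a \<in> S" "b \<in> S" "a' \<in> S" "b' \<in> S"
  shows "cmod (ip a b - ip a' b') \<le> nrm (dif a a') * nrm b + nrm a' * nrm (dif b b')"
proof -
  have "ip a b - ip a' b' = ip (dif a a') b + ip a' (dif b b')"
    using assms by (simp add: ip_simps)
  then have "cmod (ip a b - ip a' b') \<le> cmod (ip (dif a a') b) + cmod (ip a' (dif b b'))"
    by (simp add: norm_triangle_ineq)
  also have "\<dots> \<le> nrm (dif a a') * nrm b + nrm a' * nrm (dif b b')"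
    using assms by (intro add_mono cs) (simp_all add: dif_in)
  finally show ?thesis .
qed

lemma ip_conv:
  assumes a: "cs a" and b: "cs b" shows "convergent (\<lambda>n. ip (a n) (b n))"
proof -
  obtain Ba where Ba: "Ba > 0" "\<And>n. nrm (a n) \<le> Ba" using cs_bdd'[OF a] by blast
  obtain Bb where Bb: "Bb > 0" "\<And>n. nrm (b n) \<le> Bb" using cs_bdd'[OF b] by blast
  have "Cauchy (\<lambda>n. ip (a n) (b n))"
  proof (rule metric_CauchyI)
    fix e :: real assume e: "e > 0"
    define e' where "e' = e / (Ba + Bb)"
    have e': "e' > 0" using e Ba Bb by (simp add: e'_def)
    obtain N1 where N1: "\<forall>m\<ge>N1. \<forall>n\<ge>N1. nrm (dif (a m) (a n)) < e'" using a e' unfolding cs_def by blast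
    obtain N2 where N2: "\<forall>m\<ge>N2. \<forall>n\<ge>N2. nrm (dif (b m) (b n)) < e'" using b e' unfolding cs_def by blast
    show "\<exists>M. \<forall>m\<ge>M. \<forall>n\<ge>M. dist (ip (a m) (b m)) (ip (a n) (b n)) < e"
    proof (intro exI allI impI)
      fix m n assume m: "max N1 N2 \<le> m" and n: "max N1 N2 \<le> n"
      have d: "dist (ip (a m) (b m)) (ip (a n) (b n)) \<le> nrm (dif (a m) (a n)) * nrm (b m) + nrm (a n) * nrm (dif (b m) (b n))"
        unfolding dist_norm by (rule ip_diff_bound) (simp_all add: cs_in a b)
      have eq: "e' * Bb + Ba * e' = e"
      proof -
        have "e' * Bb + Ba * e' = e' * (Ba + Bb)" by (simp add: algebra_simps)
        also have "\<dots> = e" using Ba Bb by (simp add: e'_def)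
        finally show ?thesis .
      qed
      have lt: "nrm (dif (a m) (a n)) * nrm (b m) + nrm (a n) * nrm (dif (b m) (b n)) < e' * Bb + Ba * e'"
      proof -
        have "nrm (dif (a m) (a n)) * nrm (b m) \<le> nrm (dif (a m) (a n)) * Bb"
          using Bb nrm_ge0 cs_in a b dif_in by (simp add: mult_left_mono)
        also have "\<dots> < e' * Bb" using N1 m n Bb by simp
        finally have 1: "nrm (dif (a m) (a n)) * nrm (b m) < e' * Bb" .
        have "nrm (a n) * nrm (dif (b m) (b n)) \<le> Ba * nrm (dif (b m) (b n))"
          using Ba nrm_ge0 cs_in a b dif_in by (simp add: mult_right_mono)
        also have "\<dots> \<le> Ba * e'" using N2 m n Ba by (simp add: less_imp_le)
        finally show ?thesis using 1 by simp
      qed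
      show "dist (ip (a m) (b m)) (ip (a n) (b n)) < e"
        using d eq lt by linarith
    qed
  qed
  then show ?thesis using Cauchy_convergent_iff by blast
qed

lemma inS_cs: "cs a \<Longrightarrow> inS a" by (simp add: cs_def)

lemma eqv_refl: "inS a \<Longrightarrow> eqv a a"
  by (simp add: eqv_def inS_def nrm_dif_zero)

lemma eqv_sym: "inS a \<Longrightarrow> inS b \<Longrightarrow> eqv a b \<Longrightarrow> eqv b a"
  by (simp add: eqv_def inS_def nrm_dif_sym)

lemma null_cmp:
  assumes "\<And>n. 0 \<le> f n" "\<And>n. f n \<le> g n" "g \<longlonglongrightarrow> 0" shows "(f :: nat \<Rightarrow> real) \<longlonglongrightarrow> 0"
  by (rule tendsto_sandwich[of "\<lambda>n. 0" _ _ g]) (use assms in auto)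

lemma eqv_trans: "inS a \<Longrightarrow> inS b \<Longrightarrow> inS c \<Longrightarrow> eqv a b \<Longrightarrow> eqv b c \<Longrightarrow> eqv a c"
  unfolding eqv_def inS_def
  by (rule null_cmp[where g="\<lambda>n. nrm (dif (a n) (b n)) + nrm (dif (b n) (c n))"])
     (auto intro: nrm_ge0[OF dif_in] dif_in nrm_dif_tri tendsto_add_zero)

lemma eqv_pt: "inS a \<Longrightarrow> inS b \<Longrightarrow> (\<And>n t. t \<in> S \<Longrightarrow> ip (a n) t = ip (b n) t) \<Longrightarrow> eqv a b"
  unfolding eqv_def inS_def by (subst nrm_dif_zero) auto

lemma cs_const: "x \<in> S \<Longrightarrow> cs (\<lambda>n. x)"
  by (auto simp: cs_def inS_def nrm_dif_zero)

lemma cs_ad: assumes "cs a" "cs b" shows "cs (\<lambda>n. ad (a n) (b n))"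
  unfolding cs_def
proof (intro conjI allI impI)
  show "inS (\<lambda>n. ad (a n) (b n))" using assms by (simp add: inS_def cs_in ad_in)
  fix e :: real assume e: "e > 0"
  obtain N1 where N1: "\<forall>m\<ge>N1. \<forall>n\<ge>N1. nrm (dif (a m) (a n)) < e/2" using assms(1) e unfolding cs_def by (meson half_gt_zero)
  obtain N2 where N2: "\<forall>m\<ge>N2. \<forall>n\<ge>N2. nrm (dif (b m) (b n)) < e/2" using assms(2) e unfolding cs_def by (meson half_gt_zero)
  show "\<exists>N. \<forall>m\<ge>N. \<forall>n\<ge>N. nrm (dif (ad (a m) (b m)) (ad (a n) (b n))) < e"
  proof (intro exI allI impI)
    fix m n assume m: "max N1 N2 \<le> m" and n: "max N1 N2 \<le> n"
    have i: "a m \<in> S" "a n \<in> S" "b m \<in> S" "b n \<in> S" using assms cs_in by auto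
    have "nrm (dif (ad (a m) (b m)) (ad (a n) (b n))) = nrm (ad (dif (a m) (a n)) (dif (b m) (b n)))"
      by (rule nrm_cong) (use i in \<open>simp_all add: ip_simps\<close>)
    also have "\<dots> \<le> nrm (dif (a m) (a n)) + nrm (dif (b m) (b n))" using i by (simp add: nrm_add dif_in)
    also have "\<dots> < e" using N1 N2 m n by force
    finally show "nrm (dif (ad (a m) (b m)) (ad (a n) (b n))) < e" .
  qed
qed

lemma cs_sc: assumes "cs a" shows "cs (\<lambda>n. sc c (a n))"
  unfolding cs_def
proof (intro conjI allI impI)
  show "inS (\<lambda>n. sc c (a n))" using assms by (simp add: inS_def cs_in sc_in)
  fix e :: real assume e: "e > 0"
  have c1: "cmod c + 1 > 0" by (smt (verit) norm_ge_zero)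
  have e': "e / (cmod c + 1) > 0" using e c1 by simp
  obtain N where N: "\<forall>m\<ge>N. \<forall>n\<ge>N. nrm (dif (a m) (a n)) < e / (cmod c + 1)" using assms e' unfolding cs_def by blast
  show "\<exists>N. \<forall>m\<ge>N. \<forall>n\<ge>N. nrm (dif (sc c (a m)) (sc c (a n))) < e"
  proof (intro exI allI impI)
    fix m n assume m: "N \<le> m" and n: "N \<le> n"
    have i: "a m \<in> S" "a n \<in> S" using assms cs_in by auto
    have "nrm (dif (sc c (a m)) (sc c (a n))) = nrm (sc c (dif (a m) (a n)))"
      by (rule nrm_cong) (use i in \<open>simp_all add: ip_simps algebra_simps\<close>)
    also have "\<dots> = cmod c * nrm (dif (a m) (a n))" using i by (simp add: nrm_sc dif_in)
    also have "\<dots> \<le> (cmod c + 1) * nrm (dif (a m) (a n))" using i nrm_ge0 dif_in by (simp add: mult_right_mono)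
    also have "\<dots> < (cmod c + 1) * (e / (cmod c + 1))" using N m n c1
      by (intro mult_strict_left_mono) (auto simp: add_pos_nonneg)
    also have "\<dots> = e" using c1 by simp
    finally show "nrm (dif (sc c (a m)) (sc c (a n))) < e" .
  qed
qed

definition F :: "(nat \<Rightarrow> 'd) \<Rightarrow> (nat \<Rightarrow> 'd) \<Rightarrow> complex" where
  "F a b = lim (\<lambda>n. ip (a n) (b n))"

lemma F_tendsto: "cs a \<Longrightarrow> cs b \<Longrightarrow> (\<lambda>n. ip (a n) (b n)) \<longlonglongrightarrow> F a b"
  unfolding F_def using ip_conv convergent_LIMSEQ_iff by blast

lemma F_cong_tendsto:
  assumes a: "cs a" and b: "cs b" and a': "cs a'" and b': "cs b'" and ea: "eqv a a'" and eb: "eqv b b'"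
  shows "(\<lambda>n. ip (a n) (b n) - ip (a' n) (b' n)) \<longlonglongrightarrow> 0"
proof -
  obtain Bb where Bb: "Bb > 0" "\<And>n. nrm (b n) \<le> Bb" using cs_bdd'[OF b] by blast
  obtain Ba where Ba: "Ba > 0" "\<And>n. nrm (a' n) \<le> Ba" using cs_bdd'[OF a'] by blast
  have "(\<lambda>n. norm (ip (a n) (b n) - ip (a' n) (b' n))) \<longlonglongrightarrow> 0"
  proof (rule null_cmp)
    show "(\<lambda>n. nrm (dif (a n) (a' n)) * Bb + Ba * nrm (dif (b n) (b' n))) \<longlonglongrightarrow> 0"
      using ea eb unfolding eqv_def by (auto intro!: tendsto_add_zero tendsto_mult_left_zero tendsto_mult_right_zero)
    fix n
    have "cmod (ip (a n) (b n) - ip (a' n) (b' n)) \<le> nrm (dif (a n) (a' n)) * nrm (b n) + nrm (a' n) * nrm (dif (b n) (b' n))"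
      by (rule ip_diff_bound) (simp_all add: cs_in assms)
    also have "\<dots> \<le> nrm (dif (a n) (a' n)) * Bb + Ba * nrm (dif (b n) (b' n))"
      using Ba Bb nrm_ge0 cs_in assms dif_in by (intro add_mono mult_mono) auto
    finally show "norm (ip (a n) (b n) - ip (a' n) (b' n)) \<le> nrm (dif (a n) (a' n)) * Bb + Ba * nrm (dif (b n) (b' n))" .
  qed simp
  then show ?thesis by (simp add: tendsto_norm_zero_iff)
qed

lemma F_cong:
  assumes "cs a" "cs b" "cs a'" "cs b'" "eqv a a'" "eqv b b'"
  shows "F a b = F a' b'"
proof -
  have "(\<lambda>n. (ip (a n) (b n) - ip (a' n) (b' n)) + ip (a' n) (b' n)) \<longlonglongrightarrow> 0 + F a' b'"
    by (intro tendsto_add F_cong_tendsto F_tendsto assms)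
  then have "(\<lambda>n. ip (a n) (b n)) \<longlonglongrightarrow> F a' b'" by simp
  then show ?thesis unfolding F_def by (rule limI)
qed

lemma F_ad: "cs a \<Longrightarrow> cs b \<Longrightarrow> cs c \<Longrightarrow> F (\<lambda>n. ad (a n) (b n)) c = F a c + F b c"
  unfolding F_def by (subst lim_add_conv[symmetric]) (simp_all add: ip_conv ip_add cs_in)

lemma F_sc: "cs a \<Longrightarrow> cs c \<Longrightarrow> F (\<lambda>n. sc k (a n)) c = k * F a c"
  unfolding F_def by (subst lim_mult_conv[symmetric]) (simp_all add: ip_conv ip_sc cs_in)

lemma F_zr: "cs c \<Longrightarrow> F (\<lambda>n. zr) c = 0"
  unfolding F_def by (simp add: ip_zr cs_in)

lemma F_const: "x \<in> S \<Longrightarrow> y \<in> S \<Longrightarrow> F (\<lambda>n. x) (\<lambda>n. y) = ip x y"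
  unfolding F_def by simp

lemma F_sym: "cs a \<Longrightarrow> cs b \<Longrightarrow> F a b = cnj (F b a)"
proof -
  assume a: "cs a" and b: "cs b"
  have "(\<lambda>n. cnj (ip (b n) (a n))) \<longlonglongrightarrow> cnj (F b a)" by (intro tendsto_cnj F_tendsto a b)
  moreover have "cnj (ip (b n) (a n)) = ip (a n) (b n)" for n using ip_sym[of "a n" "b n"] cs_in a b by simp
  ultimately have "(\<lambda>n. ip (a n) (b n)) \<longlonglongrightarrow> cnj (F b a)" by simp
  then show ?thesis unfolding F_def by (rule limI)
qed

lemma F_pos: "cs a \<Longrightarrow> 0 \<le> Re (F a a)"
proof -
  assume a: "cs a"
  have "(\<lambda>n. Re (ip (a n) (a n))) \<longlonglongrightarrow> Re (F a a)" by (intro tendsto_Re F_tendsto a)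
  then show ?thesis by (rule LIMSEQ_le_const) (use ip_pos cs_in a in auto)
qed

lemma nrm_tendsto: "cs a \<Longrightarrow> (\<lambda>n. nrm (a n)) \<longlonglongrightarrow> sqrt (Re (F a a))"
  unfolding nrm_def by (intro tendsto_real_sqrt tendsto_Re F_tendsto)

lemma eqv_F:
  assumes a: "cs a" and b: "cs b" and h: "\<And>c. cs c \<Longrightarrow> F a c = F b c"
  shows "eqv a b"
proof -
  let ?d = "\<lambda>n. dif (a n) (b n)"
  have d: "cs ?d" unfolding dif_def by (intro cs_ad cs_sc a b)
  have "F ?d c = F a c - F b c" if c: "cs c" for c
  proof -
    have "F ?d c = F a c + F (\<lambda>n. sc (-1) (b n)) c"
      unfolding dif_def by (rule F_ad) (simp_all add: a b c cs_sc)
    also have "F (\<lambda>n. sc (-1) (b n)) c = - F b c" by (subst F_sc) (simp_all add: b c)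
    finally show ?thesis by simp
  qed
  then have "F ?d ?d = F a ?d - F b ?d" using d by blast
  then have "F ?d ?d = 0" using h[OF d] by simp
  then show ?thesis using nrm_tendsto[OF d] unfolding eqv_def by simp
qed

definition rep :: "(nat \<Rightarrow> 'd) \<Rightarrow> (nat \<Rightarrow> 'd)" where
  "rep a = (SOME b. cs b \<and> eqv a b)"

lemma rep: assumes "cs a" shows "cs (rep a)" "eqv a (rep a)" "eqv (rep a) a"
proof -
  have "cs a \<and> eqv a a" using assms eqv_refl cs_inS by blast
  then have "cs (rep a) \<and> eqv a (rep a)" unfolding rep_def by (rule someI[where P="\<lambda>b. cs b \<and> eqv a b"])
  then show "cs (rep a)" "eqv a (rep a)" "eqv (rep a) a" using eqv_sym cs_inS assms by blast+
qed

lemma rep_cong: assumes "cs a" "cs b" "eqv a b" shows "rep a = rep b"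
proof -
  have "(\<lambda>c. cs c \<and> eqv a c) = (\<lambda>c. cs c \<and> eqv b c)"
  proof (intro ext iffI conjI)
    fix c assume "cs c \<and> eqv a c" then show "cs c" "eqv b c"
      using assms eqv_sym eqv_trans cs_inS by blast+
  next
    fix c assume "cs c \<and> eqv b c" then show "cs c" "eqv a c"
      using assms eqv_sym eqv_trans cs_inS by blast+
  qed
  then show ?thesis unfolding rep_def by simp
qed

lemma rep_F: "cs a \<Longrightarrow> cs b \<Longrightarrow> (\<And>c. cs c \<Longrightarrow> F a c = F b c) \<Longrightarrow> rep a = rep b"
  by (intro rep_cong eqv_F)

lemma F_rep1: "cs a \<Longrightarrow> cs c \<Longrightarrow> F (rep a) c = F a c"
  by (rule F_cong) (simp_all add: rep eqv_refl cs_inS)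

lemma F_rep2: "cs a \<Longrightarrow> cs c \<Longrightarrow> F c (rep a) = F c a"
  by (rule F_cong) (simp_all add: rep eqv_refl cs_inS)

lemma rep_rep: "cs a \<Longrightarrow> rep (rep a) = rep a"
  by (rule rep_cong) (simp_all add: rep)

definition Kc where "Kc = rep ` {a. cs a}"
definition Kad where "Kad X Y = rep (\<lambda>n. ad (X n) (Y n))"
definition Ksc where "Ksc c X = rep (\<lambda>n. sc c (X n))"
definition Kzr where "Kzr = rep (\<lambda>n. zr)"
definition Kip where "Kip = F"

definition Ksp :: "(nat \<Rightarrow> 'd) hspace" where
  "Ksp = \<lparr>hcarrier = Kc, hadd = Kad, hscale = Ksc, hzero = Kzr, hinner = Kip\<rparr>"

lemma Kc_cs: "X \<in> Kc \<Longrightarrow> cs X" by (auto simp: Kc_def rep)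
lemma Kc_rep: "X \<in> Kc \<Longrightarrow> rep X = X" by (auto simp: Kc_def rep_rep)
lemma rep_Kc: "cs a \<Longrightarrow> rep a \<in> Kc" by (auto simp: Kc_def)

lemma Kc_eq: "X \<in> Kc \<Longrightarrow> Y \<in> Kc \<Longrightarrow> (\<And>c. cs c \<Longrightarrow> F X c = F Y c) \<Longrightarrow> X = Y"
  by (metis Kc_cs Kc_rep rep_F)

lemmas Fsimps = F_ad F_sc F_zr F_rep1 F_rep2 cs_ad cs_sc rep cs_const zr_in Kc_cs

lemma Kpre: "preH Kc Kad Ksc Kzr Kip"
proof
  show "Kzr \<in> Kc" unfolding Kzr_def by (simp add: rep_Kc cs_const zr_in)
  show "Kad x y \<in> Kc" if "x \<in> Kc" "y \<in> Kc" for x y unfolding Kad_def using that by (simp add: rep_Kc cs_ad Kc_cs)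
  show "Ksc a x \<in> Kc" if "x \<in> Kc" for a x unfolding Ksc_def using that by (simp add: rep_Kc cs_sc Kc_cs)
  show "Kip (Kad x y) w = Kip x w + Kip y w" if "x \<in> Kc" "y \<in> Kc" "w \<in> Kc" for x y w
    unfolding Kip_def Kad_def using that by (simp add: Fsimps)
  show "Kip (Ksc a x) y = a * Kip x y" if "x \<in> Kc" "y \<in> Kc" for a x y
    unfolding Kip_def Ksc_def using that by (simp add: Fsimps)
  show "Kip x y = cnj (Kip y x)" if "x \<in> Kc" "y \<in> Kc" for x y
    unfolding Kip_def using that F_sym Kc_cs by blast
  show "0 \<le> Re (Kip x x)" if "x \<in> Kc" for x
    unfolding Kip_def using that by (simp add: F_pos Kc_cs)
  show "Kip Kzr x = 0" if "x \<in> Kc" for x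
    unfolding Kip_def Kzr_def using that by (simp add: Fsimps)
qed

end

context preH begin

lemma eqv_ad: "cs a \<Longrightarrow> cs b \<Longrightarrow> cs a' \<Longrightarrow> cs b' \<Longrightarrow> eqv a a' \<Longrightarrow> eqv b b' \<Longrightarrow>
   eqv (\<lambda>n. ad (a n) (b n)) (\<lambda>n. ad (a' n) (b' n))"
  by (rule eqv_F) (auto simp: F_ad cs_ad intro!: arg_cong2[where f="(+)"] F_cong eqv_refl cs_inS)

lemma eqv_sc: "cs a \<Longrightarrow> cs a' \<Longrightarrow> eqv a a' \<Longrightarrow> eqv (\<lambda>n. sc k (a n)) (\<lambda>n. sc k (a' n))"
  by (rule eqv_F) (auto simp: F_sc cs_sc intro!: arg_cong2[where f="(*)"] F_cong eqv_refl cs_inS)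

lemma Kdif_rep: "cs a \<Longrightarrow> cs b \<Longrightarrow> preH.dif Kad Ksc (rep a) (rep b) = rep (\<lambda>n. dif (a n) (b n))"
  unfolding preH.dif_def[OF Kpre] unfolding Kad_def Ksc_def dif_def
  by (rule rep_F) (simp_all add: Fsimps)

lemma Knrm_rep: "cs a \<Longrightarrow> (\<lambda>n. nrm (a n)) \<longlonglongrightarrow> preH.nrm Kip (rep a)"
  unfolding preH.nrm_def[OF Kpre] unfolding Kip_def
  by (simp add: F_rep1 F_rep2 rep nrm_tendsto)

lemma cs_dif: "cs a \<Longrightarrow> cs b \<Longrightarrow> cs (\<lambda>n. dif (a n) (b n))"
  unfolding dif_def by (simp add: cs_ad cs_sc)

lemma Knrm_dif_lim: "cs a \<Longrightarrow> cs b \<Longrightarrow>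
   (\<lambda>n. nrm (dif (a n) (b n))) \<longlonglongrightarrow> preH.nrm Kip (preH.dif Kad Ksc (rep a) (rep b))"
  by (simp add: Kdif_rep Knrm_rep cs_dif)

definition J where "J x = rep (\<lambda>n. x)"

lemma J_Kc: "x \<in> S \<Longrightarrow> J x \<in> Kc" by (simp add: J_def rep_Kc cs_const)

lemma Knrm_J: "x \<in> S \<Longrightarrow> y \<in> S \<Longrightarrow> preH.nrm Kip (preH.dif Kad Ksc (J x) (J y)) = nrm (dif x y)"
  using Knrm_dif_lim[of "\<lambda>n. x" "\<lambda>n. y"] unfolding J_def
  by (simp add: cs_const LIMSEQ_const_iff)

lemma inv_Suc_mono: "M \<le> k \<Longrightarrow> inverse (real (Suc k)) \<le> inverse (real (Suc M))"
  by (simp add: le_imp_inverse_le)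

lemma K_complete:
  assumes fin: "\<And>k. f k \<in> Kc"
    and fc: "\<And>e. e > 0 \<Longrightarrow> \<exists>N. \<forall>m\<ge>N. \<forall>n\<ge>N. preH.nrm Kip (preH.dif Kad Ksc (f m) (f n)) < e"
  shows "\<exists>x\<in>Kc. (\<lambda>n. preH.nrm Kip (preH.dif Kad Ksc (f n) x)) \<longlonglongrightarrow> 0"
proof -
  interpret K: preH Kc Kad Ksc Kzr Kip by (rule Kpre)
  have fcs: "cs (f k)" for k using fin Kc_cs by blast
  have frep: "rep (f k) = f k" for k using fin Kc_rep by blast
  have "\<forall>k. \<exists>N. \<forall>m\<ge>N. \<forall>n\<ge>N. nrm (dif (f k m) (f k n)) < inverse (real (Suc k))"
    using fcs unfolding cs_def by simp
  then obtain N where N: "\<And>k m n. N k \<le> m \<Longrightarrow> N k \<le> n \<Longrightarrow> nrm (dif (f k m) (f k n)) < inverse (real (Suc k))"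
    by metis
  define d where "d k = f k (N k)" for k
  have dS: "d k \<in> S" for k using cs_in fcs d_def by simp
  have JdK: "J (d k) \<in> Kc" for k using J_Kc dS by blast
  have c1: "K.nrm (K.dif (f k) (J (d k))) \<le> inverse (real (Suc k))" for k
  proof -
    have "(\<lambda>n. nrm (dif (f k n) (d k))) \<longlonglongrightarrow> K.nrm (K.dif (rep (f k)) (rep (\<lambda>n. d k)))"
      by (rule Knrm_dif_lim) (simp_all add: fcs cs_const dS)
    then have t: "(\<lambda>n. nrm (dif (f k n) (d k))) \<longlonglongrightarrow> K.nrm (K.dif (f k) (J (d k)))"
      by (simp add: frep J_def)
    show ?thesis
      by (rule Lim_bounded[OF t, of "N k"]) (use N[of k _ "N k"] in \<open>auto simp: d_def intro: less_imp_le\<close>)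
  qed
  have c1': "K.nrm (K.dif (J (d k)) (f k)) \<le> inverse (real (Suc k))" for k
    using c1[of k] K.nrm_dif_sym[OF JdK fin] by simp
  have dcs: "cs d"
    unfolding cs_def inS_def
  proof (intro conjI allI impI)
    show "d n \<in> S" for n by (rule dS)
    fix e :: real assume e: "e > 0"
    obtain M1 where M1: "inverse (real (Suc M1)) < e / 3" using reals_Archimedean[of "e/3"] e by auto
    obtain M2 where M2: "\<forall>m\<ge>M2. \<forall>n\<ge>M2. K.nrm (K.dif (f m) (f n)) < e / 3" using fc[of "e/3"] e by auto
    show "\<exists>M. \<forall>m\<ge>M. \<forall>n\<ge>M. nrm (dif (d m) (d n)) < e"
    proof (intro exI allI impI)
      fix m n assume m: "max M1 M2 \<le> m" and n: "max M1 M2 \<le> n"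
      have "nrm (dif (d m) (d n)) = K.nrm (K.dif (J (d m)) (J (d n)))" using Knrm_J dS by simp
      also have "\<dots> \<le> K.nrm (K.dif (J (d m)) (f m)) + K.nrm (K.dif (f m) (J (d n)))"
        by (rule K.nrm_dif_tri) (simp_all add: JdK fin)
      also have "K.nrm (K.dif (f m) (J (d n))) \<le> K.nrm (K.dif (f m) (f n)) + K.nrm (K.dif (f n) (J (d n)))"
        by (rule K.nrm_dif_tri) (simp_all add: JdK fin)
      also have "K.nrm (K.dif (J (d m)) (f m)) \<le> inverse (real (Suc M1))"
        using order_trans[OF c1'[of m] inv_Suc_mono[of M1 m]] m by simp
      also have "K.nrm (K.dif (f n) (J (d n))) \<le> inverse (real (Suc M1))"
        using order_trans[OF c1[of n] inv_Suc_mono[of M1 n]] n by simp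
      also have "K.nrm (K.dif (f m) (f n)) < e / 3" using M2 m n by simp
      finally show "nrm (dif (d m) (d n)) < e" using M1 by simp
    qed
  qed
  define L where "L = rep d"
  have LK: "L \<in> Kc" using rep_Kc dcs L_def by simp
  have "(\<lambda>k. K.nrm (K.dif (f k) L)) \<longlonglongrightarrow> 0"
  proof (rule LIMSEQ_I)
    fix e :: real assume e: "e > 0"
    obtain M1 where M1: "inverse (real (Suc M1)) < e / 2" using reals_Archimedean[of "e/2"] e by auto
    obtain M2 where M2: "\<forall>m\<ge>M2. \<forall>n\<ge>M2. nrm (dif (d m) (d n)) < e / 2" using dcs e unfolding cs_def by (meson half_gt_zero)
    show "\<exists>no. \<forall>k\<ge>no. norm (K.nrm (K.dif (f k) L) - 0) < e"
    proof (intro exI allI impI)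
      fix k assume k: "max M1 M2 \<le> k"
      have "(\<lambda>n. nrm (dif (d k) (d n))) \<longlonglongrightarrow> K.nrm (K.dif (rep (\<lambda>n. d k)) (rep d))"
        by (rule Knrm_dif_lim) (simp_all add: dcs cs_const dS)
      then have t: "(\<lambda>n. nrm (dif (d k) (d n))) \<longlonglongrightarrow> K.nrm (K.dif (J (d k)) L)"
        by (simp add: L_def J_def)
      have b2: "K.nrm (K.dif (J (d k)) L) \<le> e / 2"
        by (rule Lim_bounded[OF t, of M2]) (use M2 k in \<open>auto intro: less_imp_le\<close>)
      have "K.nrm (K.dif (f k) L) \<le> K.nrm (K.dif (f k) (J (d k))) + K.nrm (K.dif (J (d k)) L)"
        by (rule K.nrm_dif_tri) (simp_all add: JdK fin LK)
      also have "K.nrm (K.dif (f k) (J (d k))) \<le> inverse (real (Suc M1))"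
        using order_trans[OF c1[of k] inv_Suc_mono[of M1 k]] k by simp
      finally have "K.nrm (K.dif (f k) L) < e" using M1 b2 by simp
      moreover have "0 \<le> K.nrm (K.dif (f k) L)" using K.nrm_ge0 K.dif_in fin LK by blast
      ultimately show "norm (K.nrm (K.dif (f k) L) - 0) < e" by simp
    qed
  qed
  then show ?thesis using LK by blast
qed

lemma Ksp_simps: "hcarrier Ksp = Kc" "hadd Ksp = Kad" "hscale Ksp = Ksc" "hzero Ksp = Kzr" "hinner Ksp = Kip"
  by (simp_all add: Ksp_def)

lemma hnorm_Ksp: "hnorm Ksp = preH.nrm Kip"
  by (simp add: fun_eq_iff hnorm_def preH.nrm_def[OF Kpre] Ksp_simps)

lemma hdiff_Ksp: "hdiff Ksp = preH.dif Kad Ksc"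
  by (simp add: fun_eq_iff hdiff_def preH.dif_def[OF Kpre] Ksp_simps)

lemma K_chil: "is_chilbert Ksp"
proof -
  interpret K: preH Kc Kad Ksc Kzr Kip by (rule Kpre)
  note cs' = Kc_cs
  have A1: "Kad (Kad x y) w = Kad x (Kad y w)" if "x \<in> Kc" "y \<in> Kc" "w \<in> Kc" for x y w
    unfolding Kad_def by (rule rep_F) (use that in \<open>simp_all add: Fsimps\<close>)
  have A2: "Kad x y = Kad y x" if "x \<in> Kc" "y \<in> Kc" for x y
    unfolding Kad_def by (rule rep_F) (use that in \<open>simp_all add: Fsimps\<close>)
  have A3: "Kad Kzr x = x" if "x \<in> Kc" for x
  proof -
    have "Kad Kzr x = rep x"
      unfolding Kad_def Kzr_def by (rule rep_F) (use that in \<open>simp_all add: Fsimps\<close>)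
    then show ?thesis using Kc_rep that by simp
  qed
  have A4: "\<exists>y\<in>Kc. Kad x y = Kzr" if "x \<in> Kc" for x
  proof
    show "Ksc (-1) x \<in> Kc" using that K.sc_in by blast
    show "Kad x (Ksc (-1) x) = Kzr"
      unfolding Kad_def Kzr_def Ksc_def by (rule rep_F) (use that in \<open>simp_all add: Fsimps\<close>)
  qed
  have A5: "Ksc a (Kad x y) = Kad (Ksc a x) (Ksc a y)" if "x \<in> Kc" "y \<in> Kc" for a x y
    unfolding Kad_def Ksc_def by (rule rep_F) (use that in \<open>simp_all add: Fsimps algebra_simps\<close>)
  have A6: "Ksc (a + b) x = Kad (Ksc a x) (Ksc b x)" if "x \<in> Kc" for a b x
    unfolding Kad_def Ksc_def by (rule rep_F) (use that in \<open>simp_all add: Fsimps algebra_simps\<close>)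
  have A7: "Ksc a (Ksc b x) = Ksc (a * b) x" if "x \<in> Kc" for a b x
    unfolding Ksc_def by (rule rep_F) (use that in \<open>simp_all add: Fsimps algebra_simps\<close>)
  have A8: "Ksc 1 x = x" if "x \<in> Kc" for x
  proof -
    have "Ksc 1 x = rep x"
      unfolding Ksc_def by (rule rep_F) (use that in \<open>simp_all add: Fsimps\<close>)
    then show ?thesis using Kc_rep that by simp
  qed
  have A9: "x = Kzr" if x: "x \<in> Kc" and "Kip x x = 0" for x
  proof -
    have "K.nrm x = 0" using that by (simp add: K.nrm_def)
    then have z: "\<forall>t\<in>Kc. Kip x t = 0" using K.nrm_zero_iff x by blast
    have "x = rep x" using Kc_rep x by simp
    also have "rep x = rep (\<lambda>n. zr)"
    proof (rule rep_F)
      fix c assume c: "cs c"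
      have "F x c = F x (rep c)" using F_rep2 c Kc_cs x by simp
      also have "\<dots> = 0" using z rep_Kc c unfolding Kip_def by blast
      finally show "F x c = F (\<lambda>n. zr) c" using F_zr c by simp
    qed (simp_all add: Kc_cs x cs_const zr_in)
    finally show ?thesis by (simp add: Kzr_def)
  qed
  show ?thesis
    unfolding is_chilbert_def Let_def Ksp_simps hnorm_Ksp hdiff_Ksp
  proof (intro conjI)
    show "Kzr \<in> Kc" by (rule K.zr_in)
    show "\<forall>x\<in>Kc. \<forall>y\<in>Kc. Kad x y \<in> Kc" using K.ad_in by blast
    show "\<forall>a. \<forall>x\<in>Kc. Ksc a x \<in> Kc" using K.sc_in by blast
    show "\<forall>x\<in>Kc. \<forall>y\<in>Kc. \<forall>w\<in>Kc. Kad (Kad x y) w = Kad x (Kad y w)" using A1 by blast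
    show "\<forall>x\<in>Kc. \<forall>y\<in>Kc. Kad x y = Kad y x" using A2 by blast
    show "\<forall>x\<in>Kc. Kad Kzr x = x" using A3 by blast
    show "\<forall>x\<in>Kc. \<exists>y\<in>Kc. Kad x y = Kzr" using A4 by blast
    show "\<forall>a. \<forall>x\<in>Kc. \<forall>y\<in>Kc. Ksc a (Kad x y) = Kad (Ksc a x) (Ksc a y)" using A5 by blast
    show "\<forall>a b. \<forall>x\<in>Kc. Ksc (a + b) x = Kad (Ksc a x) (Ksc b x)" using A6 by blast
    show "\<forall>a b. \<forall>x\<in>Kc. Ksc a (Ksc b x) = Ksc (a * b) x" using A7 by blast
    show "\<forall>x\<in>Kc. Ksc 1 x = x" using A8 by blast
    show "\<forall>x\<in>Kc. \<forall>y\<in>Kc. Kip x y = cnj (Kip y x)" using K.ip_sym by blast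
    show "\<forall>x\<in>Kc. \<forall>y\<in>Kc. \<forall>w\<in>Kc. Kip (Kad x y) w = Kip x w + Kip y w" using K.ip_add by blast
    show "\<forall>a. \<forall>x\<in>Kc. \<forall>y\<in>Kc. Kip (Ksc a x) y = a * Kip x y" using K.ip_sc by blast
    show "\<forall>x\<in>Kc. 0 \<le> Re (Kip x x)" using K.ip_pos by blast
    show "\<forall>x\<in>Kc. Kip x x = 0 \<longrightarrow> x = Kzr" using A9 by blast
    show "\<forall>f. (\<forall>n. f n \<in> Kc) \<longrightarrow> (\<forall>e>0. \<exists>N. \<forall>m\<ge>N. \<forall>n\<ge>N. K.nrm (K.dif (f m) (f n)) < e) \<longrightarrow>
       (\<exists>x\<in>Kc. (\<lambda>n. K.nrm (K.dif (f n) x)) \<longlonglongrightarrow> 0)"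
      using K_complete by blast
  qed
qed

end

context preH begin

definition isoD :: "('d \<Rightarrow> 'd) \<Rightarrow> bool" where
  "isoD T \<longleftrightarrow> (\<forall>x\<in>S. T x \<in> S) \<and> (\<forall>x\<in>S. \<forall>y\<in>S. ip (T x) (T y) = ip x y)"

definition Text :: "('d \<Rightarrow> 'd) \<Rightarrow> (nat \<Rightarrow> 'd) \<Rightarrow> (nat \<Rightarrow> 'd)" where
  "Text T X = rep (\<lambda>n. T (X n))"

lemma isoD_in: "isoD T \<Longrightarrow> x \<in> S \<Longrightarrow> T x \<in> S" by (simp add: isoD_def)
lemma isoD_ip: "isoD T \<Longrightarrow> x \<in> S \<Longrightarrow> y \<in> S \<Longrightarrow> ip (T x) (T y) = ip x y" by (simp add: isoD_def)

lemma T_nrm_dif: assumes T: "isoD T" and "x \<in> S" "y \<in> S"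
  shows "nrm (dif (T x) (T y)) = nrm (dif x y)"
  unfolding nrm_def using assms by (simp add: ip_simps isoD_in isoD_ip)

lemma eqv_null: "inS a \<Longrightarrow> inS b \<Longrightarrow> (\<And>n. nrm (dif (a n) (b n)) = 0) \<Longrightarrow> eqv a b"
  by (simp add: eqv_def)

lemma cs_T: assumes T: "isoD T" and a: "cs a" shows "cs (\<lambda>n. T (a n))"
  using a unfolding cs_def inS_def by (simp add: T_nrm_dif[OF T] isoD_in[OF T])

lemma eqv_T: assumes T: "isoD T" and "inS a" "inS b" "eqv a b" shows "eqv (\<lambda>n. T (a n)) (\<lambda>n. T (b n))"
  using assms unfolding eqv_def inS_def by (simp add: T_nrm_dif[OF T])

lemma T_ad_null: assumes T: "isoD T" and x: "x \<in> S" and y: "y \<in> S"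
  shows "nrm (dif (T (ad x y)) (ad (T x) (T y))) = 0"
  unfolding nrm_def using assms by (simp add: ip_simps isoD_in isoD_ip algebra_simps)

lemma T_sc_null: assumes T: "isoD T" and x: "x \<in> S"
  shows "nrm (dif (T (sc a x)) (sc a (T x))) = 0"
  unfolding nrm_def using assms by (simp add: ip_simps isoD_in isoD_ip algebra_simps)

lemma eqv_trans3: "inS a \<Longrightarrow> inS b \<Longrightarrow> inS c \<Longrightarrow> inS d \<Longrightarrow> eqv a b \<Longrightarrow> eqv b c \<Longrightarrow> eqv c d \<Longrightarrow> eqv a d"
  by (meson eqv_trans)

lemma inS_T: "isoD T \<Longrightarrow> inS a \<Longrightarrow> inS (\<lambda>n. T (a n))" by (simp add: inS_def isoD_in)

lemma Text_Kc: "isoD T \<Longrightarrow> X \<in> Kc \<Longrightarrow> Text T X \<in> Kc"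
  by (simp add: Text_def rep_Kc cs_T Kc_cs)

lemma Text_ad: assumes T: "isoD T" and X: "X \<in> Kc" and Y: "Y \<in> Kc"
  shows "Text T (Kad X Y) = Kad (Text T X) (Text T Y)"
proof -
  have cX: "cs X" and cY: "cs Y" using X Y Kc_cs by auto
  let ?s = "\<lambda>n. ad (X n) (Y n)"
  have cs1: "cs ?s" using cX cY cs_ad by blast
  have e1: "eqv (\<lambda>n. T (rep ?s n)) (\<lambda>n. T (?s n))"
    by (rule eqv_T[OF T]) (simp_all add: rep cs1 cs_inS)
  have e2: "eqv (\<lambda>n. T (?s n)) (\<lambda>n. ad (T (X n)) (T (Y n)))"
    by (rule eqv_null) (simp_all add: inS_def cs_in cX cY ad_in isoD_in[OF T] T_ad_null[OF T])
  have e3: "eqv (\<lambda>n. ad (T (X n)) (T (Y n))) (\<lambda>n. ad (rep (\<lambda>n. T (X n)) n) (rep (\<lambda>n. T (Y n)) n))"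
    by (rule eqv_ad) (simp_all add: rep cs_T[OF T] cX cY)
  have "eqv (\<lambda>n. T (rep ?s n)) (\<lambda>n. ad (rep (\<lambda>n. T (X n)) n) (rep (\<lambda>n. T (Y n)) n))"
    by (rule eqv_trans3[OF _ _ _ _ e1 e2 e3])
       (simp_all add: inS_def isoD_in[OF T] cs_in rep cs1 cX cY ad_in cs_T[OF T])
  then show ?thesis unfolding Text_def Kad_def
    by (intro rep_cong) (simp_all add: cs_T[OF T] rep cs1 cs_ad cX cY)
qed

lemma Text_sc: assumes T: "isoD T" and X: "X \<in> Kc"
  shows "Text T (Ksc a X) = Ksc a (Text T X)"
proof -
  have cX: "cs X" using X Kc_cs by auto
  let ?s = "\<lambda>n. sc a (X n)"
  have cs1: "cs ?s" using cX cs_sc by blast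
  have e1: "eqv (\<lambda>n. T (rep ?s n)) (\<lambda>n. T (?s n))"
    by (rule eqv_T[OF T]) (simp_all add: rep cs1 cs_inS)
  have e2: "eqv (\<lambda>n. T (?s n)) (\<lambda>n. sc a (T (X n)))"
    by (rule eqv_null) (simp_all add: inS_def cs_in cX sc_in isoD_in[OF T] T_sc_null[OF T])
  have e3: "eqv (\<lambda>n. sc a (T (X n))) (\<lambda>n. sc a (rep (\<lambda>n. T (X n)) n))"
    by (rule eqv_sc) (simp_all add: rep cs_T[OF T] cX)
  have "eqv (\<lambda>n. T (rep ?s n)) (\<lambda>n. sc a (rep (\<lambda>n. T (X n)) n))"
    by (rule eqv_trans3[OF _ _ _ _ e1 e2 e3])
       (simp_all add: inS_def isoD_in[OF T] cs_in rep cs1 cX sc_in cs_T[OF T])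
  then show ?thesis unfolding Text_def Ksc_def
    by (intro rep_cong) (simp_all add: cs_T[OF T] rep cs1 cs_sc cX)
qed

lemma Text_ip: assumes T: "isoD T" and X: "X \<in> Kc" and Y: "Y \<in> Kc"
  shows "Kip (Text T X) (Text T Y) = Kip X Y"
proof -
  have cX: "cs X" and cY: "cs Y" using X Y Kc_cs by auto
  have "Kip (Text T X) (Text T Y) = F (\<lambda>n. T (X n)) (\<lambda>n. T (Y n))"
    unfolding Kip_def Text_def by (simp add: F_rep1 F_rep2 rep cs_T[OF T] cX cY)
  also have "\<dots> = F X Y" unfolding F_def by (simp add: isoD_ip[OF T] cs_in cX cY)
  finally show ?thesis by (simp add: Kip_def)
qed

lemma J_ad: "x \<in> S \<Longrightarrow> y \<in> S \<Longrightarrow> J (ad x y) = Kad (J x) (J y)"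
  unfolding J_def Kad_def by (rule rep_F) (simp_all add: Fsimps)

lemma J_sc: "x \<in> S \<Longrightarrow> J (sc a x) = Ksc a (J x)"
  unfolding J_def Ksc_def by (rule rep_F) (simp_all add: Fsimps)

lemma J_ip: "x \<in> S \<Longrightarrow> y \<in> S \<Longrightarrow> Kip (J x) (J y) = ip x y"
  unfolding J_def Kip_def by (simp add: Fsimps F_const)

lemma Text_J: assumes T: "isoD T" and x: "x \<in> S" shows "Text T (J x) = J (T x)"
  unfolding Text_def J_def
proof (rule rep_cong)
  show "eqv (\<lambda>n. T (rep (\<lambda>n. x) n)) (\<lambda>n. T x)"
    using eqv_T[OF T, of "rep (\<lambda>n. x)" "\<lambda>n. x"] by (simp add: rep cs_const x cs_inS)
qed (simp_all add: cs_T[OF T] rep cs_const x isoD_in[OF T])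

lemma Text_surj:
  assumes T: "isoD T" and sj: "\<forall>x\<in>S. \<exists>y\<in>S. nrm (dif (T y) x) = 0" and X: "X \<in> Kc"
  shows "\<exists>Y\<in>Kc. Text T Y = X"
proof -
  obtain g where g: "\<And>x. x \<in> S \<Longrightarrow> g x \<in> S \<and> nrm (dif (T (g x)) x) = 0"
    using sj by metis
  have cX: "cs X" using X Kc_cs by auto
  have gip: "ip (T (g x)) t = ip x t" if "x \<in> S" "t \<in> S" for x t
  proof -
    have "ip (dif (T (g x)) x) t = 0" using g[OF that(1)] nrm_zero_iff that isoD_in[OF T] dif_in by blast
    then show ?thesis using that g isoD_in[OF T] by (simp add: ip_dif)
  qed
  define Y0 where "Y0 n = g (X n)" for n
  have Y0S: "Y0 n \<in> S" for n using g cs_in cX Y0_def by simp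
  have "cs Y0" unfolding cs_def inS_def
  proof (intro conjI allI impI)
    show "Y0 n \<in> S" for n by (rule Y0S)
    fix e :: real assume "e > 0"
    then obtain N where N: "\<forall>m\<ge>N. \<forall>n\<ge>N. nrm (dif (X m) (X n)) < e" using cX unfolding cs_def by blast
    have "nrm (dif (Y0 m) (Y0 n)) = nrm (dif (X m) (X n))" for m n
    proof -
      have "nrm (dif (Y0 m) (Y0 n)) = nrm (dif (T (Y0 m)) (T (Y0 n)))" using T_nrm_dif[OF T] Y0S by simp
      also have "\<dots> = nrm (dif (X m) (X n))"
        by (rule nrm_cong) (simp_all add: Y0_def ip_dif gip cs_in cX isoD_in[OF T] Y0S[unfolded Y0_def] dif_in)
      finally show ?thesis .
    qed
    then show "\<exists>N. \<forall>m\<ge>N. \<forall>n\<ge>N. nrm (dif (Y0 m) (Y0 n)) < e" using N by auto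
  qed
  then have cY0: "cs Y0" .
  have "Text T (rep Y0) = rep (\<lambda>n. T (Y0 n))"
    unfolding Text_def
    by (rule rep_cong) (simp_all add: cs_T[OF T] rep cY0 eqv_T[OF T] cs_inS)
  also have "\<dots> = rep X"
  proof (rule rep_cong)
    show "eqv (\<lambda>n. T (Y0 n)) X"
      by (rule eqv_null) (simp_all add: inS_def isoD_in[OF T] Y0S cs_in cX g Y0_def)
  qed (simp_all add: cs_T[OF T] cY0 cX)
  also have "\<dots> = X" using Kc_rep X by simp
  finally show ?thesis using rep_Kc cY0 by blast
qed

lemma Text_comm:
  assumes T1: "isoD T1" and T2: "isoD T2" and c: "\<And>x. x \<in> S \<Longrightarrow> T1 (T2 x) = sc c (T2 (T1 x))"
    and X: "X \<in> Kc"
  shows "Text T1 (Text T2 X) = Ksc c (Text T2 (Text T1 X))"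
proof -
  have cX: "cs X" using X Kc_cs by auto
  let ?a = "\<lambda>n. T2 (X n)" and ?b = "\<lambda>n. T1 (X n)"
  have ca: "cs ?a" and cb: "cs ?b" using cs_T T1 T2 cX by auto
  have cra: "cs (rep ?a)" and crb: "cs (rep ?b)" using rep ca cb by auto
  have c3: "cs (\<lambda>n. T2 (rep ?b n))" using cs_T[OF T2 crb] .
  have e1: "eqv (\<lambda>n. T1 (rep ?a n)) (\<lambda>n. T1 (?a n))"
    by (rule eqv_T[OF T1]) (simp_all add: rep ca cs_inS)
  have e2: "(\<lambda>n. T1 (?a n)) = (\<lambda>n. sc c (T2 (?b n)))" using c cs_in cX by auto
  have e3: "eqv (\<lambda>n. sc c (T2 (?b n))) (\<lambda>n. sc c (T2 (rep ?b n)))"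
    by (intro eqv_sc eqv_T[OF T2]) (simp_all add: rep cb cs_inS cs_T[OF T2] crb)
  have e4: "eqv (\<lambda>n. sc c (T2 (rep ?b n))) (\<lambda>n. sc c (rep (\<lambda>n. T2 (rep ?b n)) n))"
    by (intro eqv_sc) (simp_all add: rep c3)
  have "eqv (\<lambda>n. T1 (rep ?a n)) (\<lambda>n. sc c (rep (\<lambda>n. T2 (rep ?b n)) n))"
    using e1 e2 e3 e4 cs_T[OF T1 cra] cs_T[OF T1 ca] cs_sc[OF cs_T[OF T2 cb]] cs_sc[OF c3]
      cs_sc[OF rep(1)[OF c3]]
    by (metis eqv_trans cs_inS)
  then show ?thesis unfolding Text_def Ksc_def
    by (intro rep_cong) (simp_all add: cs_T[OF T1 cra] cs_sc rep c3)
qed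

lemma generic_main:
  fixes H :: "'h hspace" and V :: "'l \<Rightarrow> 'h \<Rightarrow> 'h" and T :: "'l \<Rightarrow> 'd \<Rightarrow> 'd" and e :: "'h \<Rightarrow> 'd"
    and q :: "'l \<Rightarrow> 'l \<Rightarrow> complex"
  assumes Tiso: "\<And>a. isoD (T a)"
    and Tsj: "\<And>a. \<forall>x\<in>S. \<exists>y\<in>S. nrm (dif (T a y) x) = 0"
    and Tc: "\<And>a b x. a \<noteq> b \<Longrightarrow> x \<in> S \<Longrightarrow> T a (T b x) = sc (q a b) (T b (T a x))"
    and e_in: "\<And>x. x \<in> hcarrier H \<Longrightarrow> e x \<in> S"
    and e_ad: "\<And>x y. x \<in> hcarrier H \<Longrightarrow> y \<in> hcarrier H \<Longrightarrow> e (hadd H x y) = ad (e x) (e y)"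
    and e_sc: "\<And>a x. x \<in> hcarrier H \<Longrightarrow> e (hscale H a x) = sc a (e x)"
    and e_ip: "\<And>x. x \<in> hcarrier H \<Longrightarrow> ip (e x) (e x) = hinner H x x"
    and Te: "\<And>a x. x \<in> hcarrier H \<Longrightarrow> T a (e x) = e (V a x)"
  shows "\<exists>(K :: (nat \<Rightarrow> 'd) hspace) \<iota> U.
           is_chilbert K \<and> hisometry_map H K \<iota> \<and>
           (\<forall>\<alpha>. hunitary K (U \<alpha>)) \<and>
           (\<forall>\<alpha> \<beta>. \<alpha> \<noteq> \<beta> \<longrightarrow> (\<forall>y\<in>hcarrier K.
              U \<alpha> (U \<beta> y) = hscale K (q \<alpha> \<beta>) (U \<beta> (U \<alpha> y)))) \<and>
           (\<forall>\<alpha>. \<forall>x\<in>hcarrier H. U \<alpha> (\<iota> x) = \<iota> (V \<alpha> x))"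
proof (intro exI conjI)
  show "is_chilbert Ksp" by (rule K_chil)
  show "hisometry_map H Ksp (\<lambda>x. J (e x))"
    unfolding hisometry_map_def hlinear_def Ksp_simps hnorm_Ksp
  proof (intro conjI ballI allI)
    fix x assume x: "x \<in> hcarrier H"
    show "J (e x) \<in> Kc" using J_Kc e_in x by blast
    show "preH.nrm Kip (J (e x)) = hnorm H x"
      unfolding preH.nrm_def[OF Kpre] hnorm_def using J_ip e_in e_ip x by simp
    show "J (e (hscale H a x)) = Ksc a (J (e x))" for a using J_sc e_sc e_in x by simp
    fix y assume y: "y \<in> hcarrier H"
    show "J (e (hadd H x y)) = Kad (J (e x)) (J (e y))" using J_ad e_ad e_in x y by simp
  qed
  show "\<forall>\<alpha>. hunitary Ksp (Text (T \<alpha>))"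
    unfolding hunitary_def hisometry_map_def hlinear_def Ksp_simps hnorm_Ksp
  proof (intro allI conjI ballI)
    fix a
    show "Text (T a) x \<in> Kc" if "x \<in> Kc" for x using Text_Kc Tiso that by blast
    show "Text (T a) (Kad x y) = Kad (Text (T a) x) (Text (T a) y)" if "x \<in> Kc" "y \<in> Kc" for x y
      using Text_ad Tiso that by blast
    show "Text (T a) (Ksc b x) = Ksc b (Text (T a) x)" if "x \<in> Kc" for b x
      using Text_sc Tiso that by blast
    show "preH.nrm Kip (Text (T a) x) = preH.nrm Kip x" if "x \<in> Kc" for x
      unfolding preH.nrm_def[OF Kpre] using Text_ip Tiso that by simp
    show "Text (T a) ` Kc = Kc"
      using Text_Kc Text_surj[OF Tiso Tsj] Tiso by (auto simp: image_iff) (metis)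
  qed
  show "\<forall>\<alpha> \<beta>. \<alpha> \<noteq> \<beta> \<longrightarrow> (\<forall>y\<in>hcarrier Ksp. Text (T \<alpha>) (Text (T \<beta>) y) = hscale Ksp (q \<alpha> \<beta>) (Text (T \<beta>) (Text (T \<alpha>) y)))"
    unfolding Ksp_simps using Text_comm[OF Tiso Tiso] Tc by blast
  show "\<forall>\<alpha>. \<forall>x\<in>hcarrier H. Text (T \<alpha>) (J (e x)) = J (e (V \<alpha> x))"
    using Text_J Tiso e_in Te by simp
qed

end

lemma chil_f0: assumes CH: "is_chilbert H" shows "hzero H \<in> hcarrier H"
  using CH[unfolded is_chilbert_def Let_def, THEN conjunct1] by blast

lemma chil_f1: assumes CH: "is_chilbert H" shows "x \<in> hcarrier H \<Longrightarrow> y \<in> hcarrier H \<Longrightarrow> hadd H x y \<in> hcarrier H"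
  using CH[unfolded is_chilbert_def Let_def, THEN conjunct2, THEN conjunct1] by blast

lemma chil_f2: assumes CH: "is_chilbert H" shows "x \<in> hcarrier H \<Longrightarrow> hscale H a x \<in> hcarrier H"
  using CH[unfolded is_chilbert_def Let_def, THEN conjunct2, THEN conjunct2, THEN conjunct1] by blast

lemma chil_f3: assumes CH: "is_chilbert H" shows "x \<in> hcarrier H \<Longrightarrow> hadd H (hzero H) x = x"
  using CH[unfolded is_chilbert_def Let_def, THEN conjunct2, THEN conjunct2, THEN conjunct2, THEN conjunct2, THEN conjunct2, THEN conjunct1] by blast

lemma chil_f4: assumes CH: "is_chilbert H" shows "x \<in> hcarrier H \<Longrightarrow> hscale H a (hscale H b x) = hscale H (a * b) x"
  using CH[unfolded is_chilbert_def Let_def, THEN conjunct2, THEN conjunct2, THEN conjunct2, THEN conjunct2, THEN conjunct2, THEN conjunct2, THEN conjunct2, THEN conjunct2, THEN conjunct2, THEN conjunct1] by blast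

lemma chil_f5: assumes CH: "is_chilbert H" shows "x \<in> hcarrier H \<Longrightarrow> hscale H 1 x = x"
  using CH[unfolded is_chilbert_def Let_def, THEN conjunct2, THEN conjunct2, THEN conjunct2, THEN conjunct2, THEN conjunct2, THEN conjunct2, THEN conjunct2, THEN conjunct2, THEN conjunct2, THEN conjunct2, THEN conjunct1] by blast

lemma chil_f6: assumes CH: "is_chilbert H" shows "x \<in> hcarrier H \<Longrightarrow> y \<in> hcarrier H \<Longrightarrow> hinner H x y = cnj (hinner H y x)"
  using CH[unfolded is_chilbert_def Let_def, THEN conjunct2, THEN conjunct2, THEN conjunct2, THEN conjunct2, THEN conjunct2, THEN conjunct2, THEN conjunct2, THEN conjunct2, THEN conjunct2, THEN conjunct2, THEN conjunct2, THEN conjunct1] by blast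

lemma chil_f7: assumes CH: "is_chilbert H" shows "x \<in> hcarrier H \<Longrightarrow> y \<in> hcarrier H \<Longrightarrow> w \<in> hcarrier H \<Longrightarrow> hinner H (hadd H x y) w = hinner H x w + hinner H y w"
  using CH[unfolded is_chilbert_def Let_def, THEN conjunct2, THEN conjunct2, THEN conjunct2, THEN conjunct2, THEN conjunct2, THEN conjunct2, THEN conjunct2, THEN conjunct2, THEN conjunct2, THEN conjunct2, THEN conjunct2, THEN conjunct2, THEN conjunct1] by blast

lemma chil_f8: assumes CH: "is_chilbert H" shows "x \<in> hcarrier H \<Longrightarrow> y \<in> hcarrier H \<Longrightarrow> hinner H (hscale H a x) y = a * hinner H x y"
  using CH[unfolded is_chilbert_def Let_def, THEN conjunct2, THEN conjunct2, THEN conjunct2, THEN conjunct2, THEN conjunct2, THEN conjunct2, THEN conjunct2, THEN conjunct2, THEN conjunct2, THEN conjunct2, THEN conjunct2, THEN conjunct2, THEN conjunct2, THEN conjunct1] by blast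

lemma chil_f9: assumes CH: "is_chilbert H" shows "x \<in> hcarrier H \<Longrightarrow> 0 \<le> Re (hinner H x x)"
  using CH[unfolded is_chilbert_def Let_def, THEN conjunct2, THEN conjunct2, THEN conjunct2, THEN conjunct2, THEN conjunct2, THEN conjunct2, THEN conjunct2, THEN conjunct2, THEN conjunct2, THEN conjunct2, THEN conjunct2, THEN conjunct2, THEN conjunct2, THEN conjunct2, THEN conjunct1] by blast

lemma chil_f10: assumes CH: "is_chilbert H" shows "x \<in> hcarrier H \<Longrightarrow> y \<in> hcarrier H \<Longrightarrow> hscale H a (hadd H x y) = hadd H (hscale H a x) (hscale H a y)"
  using CH[unfolded is_chilbert_def Let_def, THEN conjunct2, THEN conjunct2, THEN conjunct2, THEN conjunct2, THEN conjunct2, THEN conjunct2, THEN conjunct2, THEN conjunct1] by blast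

lemmas chil_facts = chil_f0 chil_f1 chil_f2 chil_f3 chil_f4 chil_f5 chil_f6 chil_f7 chil_f8 chil_f9

lemma chil_preH: assumes CH: "is_chilbert H"
  shows "preH (hcarrier H) (hadd H) (hscale H) (hzero H) (hinner H)"
proof
  show "hzero H \<in> hcarrier H" by (rule chil_f0[OF CH])
  show "hadd H x y \<in> hcarrier H" if "x \<in> hcarrier H" "y \<in> hcarrier H" for x y by (rule chil_f1[OF CH that])
  show "hscale H a x \<in> hcarrier H" if "x \<in> hcarrier H" for a x by (rule chil_f2[OF CH that])
  show "hinner H (hadd H x y) w = hinner H x w + hinner H y w"
    if "x \<in> hcarrier H" "y \<in> hcarrier H" "w \<in> hcarrier H" for x y w by (rule chil_f7[OF CH that])
  show "hinner H (hscale H a x) y = a * hinner H x y"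
    if "x \<in> hcarrier H" "y \<in> hcarrier H" for a x y by (rule chil_f8[OF CH that])
  show "hinner H x y = cnj (hinner H y x)"
    if "x \<in> hcarrier H" "y \<in> hcarrier H" for x y by (rule chil_f6[OF CH that])
  show "0 \<le> Re (hinner H x x)" if "x \<in> hcarrier H" for x by (rule chil_f9[OF CH that])
  show "hinner H (hzero H) x = 0" if x: "x \<in> hcarrier H" for x
  proof -
    have z: "hzero H \<in> hcarrier H" by (rule chil_f0[OF CH])
    have "hadd H (hzero H) (hzero H) = hzero H" by (rule chil_f3[OF CH z])
    then have "hinner H (hzero H) x = hinner H (hzero H) x + hinner H (hzero H) x"
      using chil_f7[OF CH z z x] by simp
    then show ?thesis by simp
  qed
qed

lemma unimod: "cmod z = 1 \<Longrightarrow> z * cnj z = 1"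
  by (metis complex_norm_square of_real_1 power_one)

lemma unimod': "cmod z = 1 \<Longrightarrow> cnj z * z = 1"
  using unimod by (simp add: mult.commute)

context preH begin

lemma ip_expand: "x \<in> S \<Longrightarrow> y \<in> S \<Longrightarrow>
  ip (ad x (sc c y)) (ad x (sc c y)) = ip x x + cnj c * ip x y + c * ip y x + c * cnj c * ip y y"
  by (simp add: ip_simps algebra_simps)

lemma polar:
  assumes x: "x \<in> S" and y: "y \<in> S"
  shows "4 * ip x y = ip (ad x (sc 1 y)) (ad x (sc 1 y)) - ip (ad x (sc (-1) y)) (ad x (sc (-1) y))
     + \<i> * ip (ad x (sc \<i> y)) (ad x (sc \<i> y)) - \<i> * ip (ad x (sc (-\<i>) y)) (ad x (sc (-\<i>) y))"
  unfolding ip_expand[OF x y] by (simp add: algebra_simps)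

lemma polar_iso:
  assumes Tin: "\<And>x. x \<in> S \<Longrightarrow> T x \<in> S"
    and Tad: "\<And>x y. x \<in> S \<Longrightarrow> y \<in> S \<Longrightarrow> T (ad x y) = ad (T x) (T y)"
    and Tsc: "\<And>a x. x \<in> S \<Longrightarrow> T (sc a x) = sc a (T x)"
    and Tn: "\<And>x. x \<in> S \<Longrightarrow> nrm (T x) = nrm x"
    and x: "x \<in> S" and y: "y \<in> S"
  shows "ip (T x) (T y) = ip x y"
proof -
  have P: "ip (T u) (T u) = ip u u" if u: "u \<in> S" for u
  proof -
    have "Re (ip (T u) (T u)) = Re (ip u u)" using Tn[OF u] nrm_sq u Tin by metis
    then show ?thesis using ip_self u Tin by metis
  qed
  have Q: "ip (ad (T x) (sc c (T y))) (ad (T x) (sc c (T y))) = ip (ad x (sc c y)) (ad x (sc c y))" for c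
  proof -
    have "ad (T x) (sc c (T y)) = T (ad x (sc c y))" using Tad Tsc x y sc_in by simp
    then show ?thesis using P x y ad_in sc_in by simp
  qed
  have "4 * ip (T x) (T y) = ip (ad (T x) (sc 1 (T y))) (ad (T x) (sc 1 (T y))) - ip (ad (T x) (sc (-1) (T y))) (ad (T x) (sc (-1) (T y)))
     + \<i> * ip (ad (T x) (sc \<i> (T y))) (ad (T x) (sc \<i> (T y))) - \<i> * ip (ad (T x) (sc (-\<i>) (T y))) (ad (T x) (sc (-\<i>) (T y)))"
    by (rule polar) (simp_all add: Tin x y)
  also have "\<dots> = ip (ad x (sc 1 y)) (ad x (sc 1 y)) - ip (ad x (sc (-1) y)) (ad x (sc (-1) y))
     + \<i> * ip (ad x (sc \<i> y)) (ad x (sc \<i> y)) - \<i> * ip (ad x (sc (-\<i>) y)) (ad x (sc (-\<i>) y))"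
    by (simp only: Q)
  also have "\<dots> = 4 * ip x y" by (rule polar[OF x y, symmetric])
  finally show ?thesis by simp
qed

end

definition lo :: "'l rel" where "lo = (SOME r. Well_order r \<and> Field r = UNIV)"

lemma lo_prop: "Well_order (lo :: 'a rel) \<and> Field (lo :: 'a rel) = UNIV"
proof -
  have "\<exists>r :: 'a rel. Well_order r \<and> Field r = UNIV" by (rule well_ordering)
  then have "Well_order (SOME r :: 'a rel. Well_order r \<and> Field r = UNIV) \<and> Field (SOME r :: 'a rel. Well_order r \<and> Field r = UNIV) = UNIV"
    by (rule someI_ex)
  then show ?thesis unfolding lo_def .
qed

lemma lo_wo: "well_order_on (Field lo) lo" using lo_prop by (rule conjunct1)
lemma lo_lo: "linear_order_on (Field lo) lo" using lo_wo unfolding well_order_on_def by (rule conjunct1)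
lemma lo_po: "partial_order_on (Field lo) lo" using lo_lo unfolding linear_order_on_def by (rule conjunct1)
lemma lo_tot: "total_on (Field lo) lo" using lo_lo unfolding linear_order_on_def by (rule conjunct2)
lemma lo_pre: "preorder_on (Field lo) lo" using lo_po unfolding partial_order_on_def by (rule conjunct1)
lemma lo_trans: "trans lo" using lo_pre unfolding preorder_on_def by blast
lemma lo_antisym: "antisym lo" using lo_po unfolding partial_order_on_def by (rule conjunct2)
lemmas lo_lin12 = lo_trans lo_antisym
lemma lo_lin3: "total_on UNIV lo"
proof -
  have F: "Field lo = UNIV" using lo_prop by (rule conjunct2)
  show ?thesis using lo_tot unfolding F .
qed

lemmas lo_lin = lo_lin12 lo_lin3

definition lt :: "'l \<Rightarrow> 'l \<Rightarrow> bool" where "lt a b \<longleftrightarrow> (a, b) \<in> lo \<and> a \<noteq> b"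

lemma lt_total: fixes a b :: 'l assumes "a \<noteq> b" shows "lt a b \<or> lt b a"
proof -
  have T: "total_on UNIV (lo :: 'l rel)" by (rule lo_lin3)
  have "(a, b) \<in> lo \<or> (b, a) \<in> lo" using T assms unfolding total_on_def by simp
  then show ?thesis using assms unfolding lt_def by auto
qed

lemma lt_trans: assumes "lt a b" "lt b c" shows "lt a c"
proof -
  have ab: "(a, b) \<in> lo" "a \<noteq> b" and bc: "(b, c) \<in> lo" using assms unfolding lt_def by auto
  have "(a, c) \<in> lo" using transD[OF lo_trans ab(1) bc] .
  moreover have "a \<noteq> c"
  proof
    assume "a = c"
    then have "(b, a) \<in> lo" using bc by simp
    then have "a = b" using antisymD[OF lo_antisym ab(1)] by blast
    then show False using ab(2) by simp
  qed
  ultimately show ?thesis unfolding lt_def by simp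
qed

lemma lt_asym: assumes "lt a b" shows "\<not> lt b a"
proof
  assume "lt b a"
  then have ba: "(b, a) \<in> lo" unfolding lt_def by simp
  have ab: "(a, b) \<in> lo" "a \<noteq> b" using assms unfolding lt_def by auto
  show False using antisymD[OF lo_antisym ab(1) ba] ab(2) by simp
qed

lemma lt_irr: "\<not> lt a a" by (simp add: lt_def)

definition spt :: "('l \<Rightarrow> nat) \<Rightarrow> 'l set" where "spt n = {a. n a \<noteq> 0}"
definition fs :: "('l \<Rightarrow> nat) \<Rightarrow> bool" where "fs n \<longleftrightarrow> finite (spt n)"

lemma ex_min: "finite A \<Longrightarrow> A \<noteq> {} \<Longrightarrow> \<exists>a\<in>A. \<forall>b\<in>A. b \<noteq> a \<longrightarrow> lt a b"
proof (induction A rule: finite_ne_induct)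
  case (singleton x) then show ?case by simp
next
  case (insert x F)
  then obtain m where m: "m \<in> F" "\<And>b. b \<in> F \<Longrightarrow> b \<noteq> m \<Longrightarrow> lt m b" by blast
  have "x \<noteq> m" using insert.hyps m(1) by auto
  then have "lt x m \<or> lt m x" by (rule lt_total)
  then show ?case
  proof
    assume 1: "lt x m"
    show ?thesis
    proof (intro bexI[of _ x] ballI impI)
      fix b assume b: "b \<in> insert x F" "b \<noteq> x"
      then have bF: "b \<in> F" by simp
      show "lt x b"
      proof (cases "b = m")
        case True then show ?thesis using 1 by simp
      next
        case False then show ?thesis using lt_trans[OF 1 m(2)[OF bF False]] by simp
      qed
    qed simp
  next
    assume 2: "lt m x"
    show ?thesis
    proof (intro bexI[of _ m] ballI impI)
      fix b assume b: "b \<in> insert x F" "b \<noteq> m"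
      show "lt m b"
      proof (cases "b = x")
        case True then show ?thesis using 2 by simp
      next
        case False then show ?thesis using m(2) b by simp
      qed
    qed (simp add: m(1))
  qed
qed

definition mn :: "('l \<Rightarrow> nat) \<Rightarrow> 'l" where
  "mn n = (THE a. n a \<noteq> 0 \<and> (\<forall>b. n b \<noteq> 0 \<longrightarrow> b \<noteq> a \<longrightarrow> lt a b))"

lemma mn_eq: assumes h1: "n a \<noteq> 0" and h2: "\<forall>b. n b \<noteq> 0 \<longrightarrow> b \<noteq> a \<longrightarrow> lt a b"
  shows "mn n = a"
  unfolding mn_def
proof (rule the_equality)
  show "n a \<noteq> 0 \<and> (\<forall>b. n b \<noteq> 0 \<longrightarrow> b \<noteq> a \<longrightarrow> lt a b)" using h1 h2 by simp
  fix a' assume a': "n a' \<noteq> 0 \<and> (\<forall>b. n b \<noteq> 0 \<longrightarrow> b \<noteq> a' \<longrightarrow> lt a' b)"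
  show "a' = a"
  proof (rule ccontr)
    assume ne: "a' \<noteq> a"
    have l1: "lt a' a" using a' h1 ne by auto
    have l2: "lt a a'" using h2 a' ne by auto
    show False using lt_asym[OF l1] l2 by simp
  qed
qed

lemma mn: assumes "fs n" "n \<noteq> 0"
  shows "n (mn n) \<noteq> 0" "\<And>b. n b \<noteq> 0 \<Longrightarrow> b \<noteq> mn n \<Longrightarrow> lt (mn n) b"
proof -
  have "spt n \<noteq> {}" using assms(2) by (auto simp: spt_def fun_eq_iff)
  then obtain a where a: "a \<in> spt n" "\<forall>b\<in>spt n. b \<noteq> a \<longrightarrow> lt a b"
    using ex_min assms(1) fs_def by metis
  have "mn n = a" by (rule mn_eq) (use a in \<open>auto simp: spt_def\<close>)
  then show "n (mn n) \<noteq> 0" "\<And>b. n b \<noteq> 0 \<Longrightarrow> b \<noteq> mn n \<Longrightarrow> lt (mn n) b"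
    using a by (auto simp: spt_def)
qed

definition ev :: "'l \<Rightarrow> 'l \<Rightarrow> nat" where "ev a = (\<lambda>b. if b = a then 1 else 0)"
definition dec :: "('l \<Rightarrow> nat) \<Rightarrow> 'l \<Rightarrow> nat" where "dec n = n(mn n := n (mn n) - 1)"

lemma dec_add: "fs n \<Longrightarrow> n \<noteq> 0 \<Longrightarrow> dec n + ev (mn n) = n"
  using mn(1)[of n] by (auto simp: fun_eq_iff dec_def ev_def)

lemma spt_add: "spt (n + m) = spt n \<union> spt m" by (auto simp: spt_def)
lemma fs_add: "fs n \<Longrightarrow> fs m \<Longrightarrow> fs (n + m)" by (simp add: fs_def spt_add)
lemma fs_le: assumes "m \<le> n" "fs n" shows "fs m"
proof -
  have "spt m \<subseteq> spt n"
  proof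
    fix a assume "a \<in> spt m"
    then have "m a \<noteq> 0" by (simp add: spt_def)
    moreover have "m a \<le> n a" using assms(1) by (simp add: le_fun_def)
    ultimately show "a \<in> spt n" by (simp add: spt_def)
  qed
  then show ?thesis using assms(2) finite_subset unfolding fs_def by blast
qed
lemma fs_diff: "fs n \<Longrightarrow> fs (n - m)" by (rule fs_le[of _ n]) (auto simp: le_fun_def)
lemma fs_ev: "fs (ev a)" by (simp add: fs_def spt_def ev_def)
lemma fs_0: "fs 0" by (simp add: fs_def spt_def)
lemma fs_dec: "fs n \<Longrightarrow> fs (dec n)" by (rule fs_le[of _ n]) (auto simp: le_fun_def dec_def)

definition sz :: "('l \<Rightarrow> nat) \<Rightarrow> nat" where "sz n = sum n (spt n)"

lemma sz_super: "finite F \<Longrightarrow> spt n \<subseteq> F \<Longrightarrow> sz n = sum n F"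
  unfolding sz_def by (rule sum.mono_neutral_left) (auto simp: spt_def)

lemma sz_dec: assumes "fs n" "n \<noteq> 0" shows "sz n = Suc (sz (dec n))"
proof -
  let ?A = "spt n" and ?a = "mn n"
  have fin: "finite ?A" using assms fs_def by blast
  have a: "?a \<in> ?A" using mn(1)[OF assms] by (simp add: spt_def)
  have "spt (dec n) \<subseteq> ?A" by (auto simp: spt_def dec_def split: if_splits)
  then have "sz (dec n) = sum (dec n) ?A" using sz_super fin by blast
  also have "\<dots> = dec n ?a + sum (dec n) (?A - {?a})" using sum.remove[OF fin a] by simp
  also have "sum (dec n) (?A - {?a}) = sum n (?A - {?a})" by (rule sum.cong) (auto simp: dec_def)
  also have "dec n ?a = n ?a - 1" by (simp add: dec_def)
  finally have 1: "sz (dec n) = (n ?a - 1) + sum n (?A - {?a})" .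
  have "sz n = n ?a + sum n (?A - {?a})" unfolding sz_def using sum.remove[OF fin a] by simp
  then show ?thesis using 1 mn(1)[OF assms] by simp
qed

lemma sz0: "fs n \<Longrightarrow> sz n = 0 \<Longrightarrow> n = 0"
  unfolding sz_def fs_def by (auto simp: fun_eq_iff spt_def)

lemma fs_induct:
  fixes n :: "'l \<Rightarrow> nat" and P :: "('l \<Rightarrow> nat) \<Rightarrow> bool"
  assumes "fs n" "P 0" "\<And>n. fs n \<Longrightarrow> n \<noteq> 0 \<Longrightarrow> P (dec n) \<Longrightarrow> P n"
  shows "P n"
proof -
  have "\<forall>n::'l \<Rightarrow> nat. fs n \<longrightarrow> sz n = k \<longrightarrow> P n" for k
  proof (induction k)
    case 0 then show ?case using sz0 assms(2) by blast
  next
    case (Suc k)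
    show ?case
    proof (intro allI impI)
      fix n :: "'l \<Rightarrow> nat" assume n: "fs n" "sz n = Suc k"
      then have n0: "n \<noteq> 0" by (auto simp: sz_def spt_def)
      have "sz (dec n) = k" using sz_dec[OF n(1) n0] n(2) by simp
      then have "P (dec n)" using Suc.IH fs_dec[OF n(1)] by blast
      then show "P n" using assms(3) n(1) n0 by blast
    qed
  qed
  then show ?thesis using assms(1) by blast
qed

lemma ev_mn: "mn (ev a) = a"
proof -
  have h1: "ev a a \<noteq> 0" by (simp add: ev_def)
  have h2: "\<forall>b. ev a b \<noteq> 0 \<longrightarrow> b \<noteq> a \<longrightarrow> lt a b" by (simp add: ev_def)
  show ?thesis by (rule mn_eq[OF h1 h2])
qed
lemma dec_ev: "dec (ev a) = 0" unfolding dec_def ev_mn by (simp add: fun_eq_iff ev_def)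
lemma ev_ne0: "ev a \<noteq> 0" by (simp add: ev_def fun_eq_iff)


locale qsys =
  fixes H :: "'h hspace" and q :: "'l \<Rightarrow> 'l \<Rightarrow> complex" and V :: "'l \<Rightarrow> 'h \<Rightarrow> 'h"
  assumes chil: "is_chilbert H"
    and q1: "\<And>a b. a \<noteq> b \<Longrightarrow> cmod (q a b) = 1"
    and iso: "\<And>a. hisometry H (V a)"
    and comm: "\<And>a b x. a \<noteq> b \<Longrightarrow> x \<in> hcarrier H \<Longrightarrow> V a (V b x) = hscale H (q a b) (V b (V a x))"
begin

sublocale Hs: preH "hcarrier H" "hadd H" "hscale H" "hzero H" "hinner H"
  by (rule chil_preH[OF chil])

lemma sc_in: "x \<in> hcarrier H \<Longrightarrow> hscale H a x \<in> hcarrier H" by (rule chil_f2[OF chil])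
lemma ad_in: "x \<in> hcarrier H \<Longrightarrow> y \<in> hcarrier H \<Longrightarrow> hadd H x y \<in> hcarrier H" by (rule chil_f1[OF chil])
lemma sc_sc: "x \<in> hcarrier H \<Longrightarrow> hscale H a (hscale H b x) = hscale H (a * b) x" by (rule chil_f4[OF chil])
lemma sc_1: "x \<in> hcarrier H \<Longrightarrow> hscale H 1 x = x" by (rule chil_f5[OF chil])
lemma sc_ad: "x \<in> hcarrier H \<Longrightarrow> y \<in> hcarrier H \<Longrightarrow> hscale H a (hadd H x y) = hadd H (hscale H a x) (hscale H a y)"
  by (rule chil_f10[OF chil])

definition isoH :: "('h \<Rightarrow> 'h) \<Rightarrow> bool" where
  "isoH f \<longleftrightarrow> (\<forall>x\<in>hcarrier H. f x \<in> hcarrier H) \<and>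
     (\<forall>x\<in>hcarrier H. \<forall>y\<in>hcarrier H. f (hadd H x y) = hadd H (f x) (f y)) \<and>
     (\<forall>a. \<forall>x\<in>hcarrier H. f (hscale H a x) = hscale H a (f x)) \<and>
     (\<forall>x\<in>hcarrier H. \<forall>y\<in>hcarrier H. hinner H (f x) (f y) = hinner H x y)"

lemma isoH_in: "isoH f \<Longrightarrow> x \<in> hcarrier H \<Longrightarrow> f x \<in> hcarrier H" by (simp add: isoH_def)
lemma isoH_ad: "isoH f \<Longrightarrow> x \<in> hcarrier H \<Longrightarrow> y \<in> hcarrier H \<Longrightarrow> f (hadd H x y) = hadd H (f x) (f y)" by (simp add: isoH_def)
lemma isoH_sc: "isoH f \<Longrightarrow> x \<in> hcarrier H \<Longrightarrow> f (hscale H a x) = hscale H a (f x)" by (simp add: isoH_def)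
lemma isoH_ip: "isoH f \<Longrightarrow> x \<in> hcarrier H \<Longrightarrow> y \<in> hcarrier H \<Longrightarrow> hinner H (f x) (f y) = hinner H x y" by (simp add: isoH_def)

lemma isoH_id: "isoH id" by (simp add: isoH_def)
lemma isoH_comp: "isoH f \<Longrightarrow> isoH g \<Longrightarrow> isoH (f \<circ> g)" by (simp add: isoH_def)

lemma isoH_V: "isoH (V a)"
proof -
  have h: "hisometry_map H H (V a)" using iso hisometry_def by blast
  have i: "\<And>x. x \<in> hcarrier H \<Longrightarrow> V a x \<in> hcarrier H" using h by (simp add: hisometry_map_def hlinear_def)
  have d: "\<And>x y. x \<in> hcarrier H \<Longrightarrow> y \<in> hcarrier H \<Longrightarrow> V a (hadd H x y) = hadd H (V a x) (V a y)"
    using h by (simp add: hisometry_map_def hlinear_def)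
  have s: "\<And>c x. x \<in> hcarrier H \<Longrightarrow> V a (hscale H c x) = hscale H c (V a x)"
    using h by (simp add: hisometry_map_def hlinear_def)
  have n: "\<And>x. x \<in> hcarrier H \<Longrightarrow> Hs.nrm (V a x) = Hs.nrm x"
    using h by (simp add: hisometry_map_def hnorm_def Hs.nrm_def)
  show ?thesis unfolding isoH_def using i d s Hs.polar_iso[OF i d s n] by blast
qed

fun Wk :: "nat \<Rightarrow> ('l \<Rightarrow> nat) \<Rightarrow> 'h \<Rightarrow> 'h" where
  "Wk 0 n = id"
| "Wk (Suc k) n = (if n = 0 then id else V (mn n) \<circ> Wk k (dec n))"

definition W :: "('l \<Rightarrow> nat) \<Rightarrow> 'h \<Rightarrow> 'h" where "W n = Wk (sz n) n"

lemma W_0: "W 0 = id" by (simp add: W_def sz_def spt_def)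

lemma W_unf: "fs n \<Longrightarrow> n \<noteq> 0 \<Longrightarrow> W n = V (mn n) \<circ> W (dec n)"
  unfolding W_def by (simp add: sz_dec)

lemma W_iso: assumes "fs n" shows "isoH (W n)"
proof (rule fs_induct[OF assms])
  show "isoH (W 0)" unfolding W_0 by (rule isoH_id)
next
  fix n :: "'l \<Rightarrow> nat" assume h: "fs n" "n \<noteq> 0" "isoH (W (dec n))"
  show "isoH (W n)" unfolding W_unf[OF h(1,2)] using h(3) by (intro isoH_comp isoH_V)
qed

lemma W_ev: "W (ev a) = V a"
  using W_unf[OF fs_ev ev_ne0] by (simp add: ev_mn dec_ev W_0)

end

context qsys begin

definition sigI :: "'l set \<Rightarrow> ('l \<times> 'l) set" where
  "sigI F = {p \<in> F \<times> F. lt (snd p) (fst p)}"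

definition sigF :: "'l set \<Rightarrow> ('l \<Rightarrow> nat) \<Rightarrow> ('l \<Rightarrow> nat) \<Rightarrow> complex" where
  "sigF F n m = (\<Prod>p\<in>sigI F. q (fst p) (snd p) ^ (n (fst p) * m (snd p)))"

definition sig :: "('l \<Rightarrow> nat) \<Rightarrow> ('l \<Rightarrow> nat) \<Rightarrow> complex" where
  "sig n m = sigF (spt n \<union> spt m) n m"

lemma sigI_fin: "finite F \<Longrightarrow> finite (sigI F)"
  unfolding sigI_def by (rule finite_subset[of _ "F \<times> F"]) auto

lemma sigF_mono: assumes "finite F" "G \<subseteq> F" "spt n \<subseteq> G" "spt m \<subseteq> G"
  shows "sigF G n m = sigF F n m"
  unfolding sigF_def
proof (rule prod.mono_neutral_left)
  show "finite (sigI F)" using sigI_fin assms(1) by blast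
  show "sigI G \<subseteq> sigI F" using assms(2) by (auto simp: sigI_def)
  show "\<forall>p\<in>sigI F - sigI G. q (fst p) (snd p) ^ (n (fst p) * m (snd p)) = 1"
  proof
    fix p assume p: "p \<in> sigI F - sigI G"
    then have "fst p \<notin> G \<or> snd p \<notin> G" by (auto simp: sigI_def)
    then have "n (fst p) = 0 \<or> m (snd p) = 0" using assms(3,4) by (auto simp: spt_def)
    then show "q (fst p) (snd p) ^ (n (fst p) * m (snd p)) = 1" by auto
  qed
qed

lemma sig_F: assumes "finite F" "spt n \<subseteq> F" "spt m \<subseteq> F" "fs n" "fs m"
  shows "sig n m = sigF F n m"
  unfolding sig_def by (rule sigF_mono) (use assms in \<open>auto simp: fs_def\<close>)

lemma sig_add1: assumes "fs n" "fs n'" "fs m"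
  shows "sig (n + n') m = sig n m * sig n' m"
proof -
  let ?F = "spt n \<union> spt n' \<union> spt m"
  have fin: "finite ?F" using assms by (simp add: fs_def)
  have "sig (n + n') m = sigF ?F (n + n') m" by (rule sig_F) (use assms fin in \<open>auto simp: spt_add fs_add\<close>)
  moreover have "sig n m = sigF ?F n m" by (rule sig_F) (use assms fin in auto)
  moreover have "sig n' m = sigF ?F n' m" by (rule sig_F) (use assms fin in auto)
  moreover have "sigF ?F (n + n') m = sigF ?F n m * sigF ?F n' m"
    unfolding sigF_def by (simp add: prod.distrib[symmetric] power_add distrib_right)
  ultimately show ?thesis by simp
qed

lemma sig_add2: assumes "fs n" "fs m" "fs m'"
  shows "sig n (m + m') = sig n m * sig n m'"
proof -
  let ?F = "spt n \<union> spt m \<union> spt m'"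
  have fin: "finite ?F" using assms by (simp add: fs_def)
  have "sig n (m + m') = sigF ?F n (m + m')" by (rule sig_F) (use assms fin in \<open>auto simp: spt_add fs_add\<close>)
  moreover have "sig n m = sigF ?F n m" by (rule sig_F) (use assms fin in auto)
  moreover have "sig n m' = sigF ?F n m'" by (rule sig_F) (use assms fin in auto)
  moreover have "sigF ?F n (m + m') = sigF ?F n m * sigF ?F n m'"
    unfolding sigF_def by (simp add: prod.distrib[symmetric] power_add distrib_left)
  ultimately show ?thesis by simp
qed

lemma sig_0l: "sig 0 m = 1" by (simp add: sig_def sigF_def)
lemma sig_0r: "sig n 0 = 1" by (simp add: sig_def sigF_def)

lemma sig_norm: "cmod (sig n m) = 1"
proof -
  have "cmod (sig n m) = (\<Prod>p\<in>sigI (spt n \<union> spt m). cmod (q (fst p) (snd p) ^ (n (fst p) * m (snd p))))"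
    unfolding sig_def sigF_def by (simp add: prod_norm)
  also have "\<dots> = (\<Prod>p\<in>sigI (spt n \<union> spt m). 1)"
  proof (rule prod.cong)
    fix p assume "p \<in> sigI (spt n \<union> spt m)"
    then have "fst p \<noteq> snd p" by (auto simp: sigI_def lt_irr)
    then show "cmod (q (fst p) (snd p) ^ (n (fst p) * m (snd p))) = 1" by (simp add: norm_power q1)
  qed simp
  finally show ?thesis by simp
qed

lemma sig_cnj: "cnj (sig n m) * sig n m = 1" using unimod'[OF sig_norm] .
lemma sig_cnj': "sig n m * cnj (sig n m) = 1" using unimod[OF sig_norm] .

lemma sig_ev_low: assumes "\<And>c. p c \<noteq> 0 \<Longrightarrow> \<not> lt c b" shows "sig (ev b) p = 1"
  unfolding sig_def sigF_def
proof (rule prod.neutral, rule ballI)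
  fix x assume x: "x \<in> sigI (spt (ev b) \<union> spt p)"
  have "ev b (fst x) * p (snd x) = 0"
  proof (rule ccontr)
    assume "ev b (fst x) * p (snd x) \<noteq> 0"
    then have "fst x = b" "p (snd x) \<noteq> 0" by (auto simp: ev_def split: if_splits)
    moreover have "lt (snd x) (fst x)" using x by (simp add: sigI_def)
    ultimately show False using assms by auto
  qed
  then show "q (fst x) (snd x) ^ (ev b (fst x) * p (snd x)) = 1" by (simp only: power_0)
qed

lemma sig_ev_ev: assumes "lt a b" shows "sig (ev b) (ev a) = q b a"
proof -
  have ab: "a \<noteq> b" using assms lt_irr[of a] by auto
  have sp: "spt (ev b) \<union> spt (ev a) = {a, b}" by (auto simp: spt_def ev_def)
  have I: "sigI {a, b} = {(b, a)}" using assms lt_asym[OF assms] lt_irr[of a] lt_irr[of b] ab by (auto simp: sigI_def)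
  show ?thesis unfolding sig_def sigF_def sp I by (simp add: ev_def ab)
qed

end

context qsys begin

lemma W_in: "fs n \<Longrightarrow> x \<in> hcarrier H \<Longrightarrow> W n x \<in> hcarrier H" using W_iso isoH_in by blast
lemma V_in: "x \<in> hcarrier H \<Longrightarrow> V a x \<in> hcarrier H" using isoH_V isoH_in by blast
lemma V_sc: "x \<in> hcarrier H \<Longrightarrow> V a (hscale H c x) = hscale H c (V a x)" using isoH_V isoH_sc by blast
lemma W_sc: "fs n \<Longrightarrow> x \<in> hcarrier H \<Longrightarrow> W n (hscale H c x) = hscale H c (W n x)" using W_iso isoH_sc by blast

lemma V_W: assumes p: "fs p"
  shows "\<forall>x\<in>hcarrier H. V b (W p x) = hscale H (sig (ev b) p) (W (p + ev b) x)"
proof (rule fs_induct[OF p])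
  show "\<forall>x\<in>hcarrier H. V b (W 0 x) = hscale H (sig (ev b) 0) (W (0 + ev b) x)"
    by (simp add: W_0 W_ev sig_0r sc_1 V_in)
next
  fix p :: "'l \<Rightarrow> nat" assume p: "fs p" "p \<noteq> 0"
    and IH: "\<forall>x\<in>hcarrier H. V b (W (dec p) x) = hscale H (sig (ev b) (dec p)) (W (dec p + ev b) x)"
  define a where "a = mn p"
  have pa: "p a \<noteq> 0" using mn(1)[OF p] unfolding a_def .
  have pmin: "\<And>c. p c \<noteq> 0 \<Longrightarrow> c \<noteq> a \<Longrightarrow> lt a c" using mn(2)[OF p] unfolding a_def .
  have pd: "dec p + ev a = p" using dec_add[OF p] unfolding a_def .
  have fpb: "fs (p + ev b)" by (rule fs_add[OF p(1) fs_ev])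
  have pb0: "p + ev b \<noteq> 0"
  proof
    assume "p + ev b = 0"
    then have "(p + ev b) a = 0" by simp
    then show False using pa by simp
  qed
  have Wp: "W p = V a \<circ> W (dec p)" using W_unf[OF p] unfolding a_def .
  show "\<forall>x\<in>hcarrier H. V b (W p x) = hscale H (sig (ev b) p) (W (p + ev b) x)"
  proof (cases "b = a \<or> lt b a")
    case True
    have m: "mn (p + ev b) = b"
    proof (rule mn_eq)
      show "(p + ev b) b \<noteq> 0" by (simp add: ev_def)
      show "\<forall>c. (p + ev b) c \<noteq> 0 \<longrightarrow> c \<noteq> b \<longrightarrow> lt b c"
      proof (intro allI impI)
        fix c assume c: "(p + ev b) c \<noteq> 0" "c \<noteq> b"
        then have pc: "p c \<noteq> 0" by (simp add: ev_def)
        show "lt b c"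
        proof (cases "c = a")
          case True then show ?thesis using \<open>b = a \<or> lt b a\<close> c(2) by auto
        next
          case False
          then have "lt a c" using pmin pc by blast
          then show ?thesis using \<open>b = a \<or> lt b a\<close> lt_trans[of b a c] by auto
        qed
      qed
    qed
    have d: "dec (p + ev b) = p" unfolding dec_def m by (simp add: fun_eq_iff ev_def)
    have W1: "W (p + ev b) = V b \<circ> W p" using W_unf[OF fpb pb0] m d by simp
    have s1: "sig (ev b) p = 1"
    proof (rule sig_ev_low)
      fix c assume pc: "p c \<noteq> 0"
      show "\<not> lt c b"
      proof
        assume cb: "lt c b"
        have "c = a \<or> lt a c" using pmin pc by blast
        then have "lt a b" using cb lt_trans[of a c b] by auto
        then show False using True lt_asym[of a b] lt_irr[of a] by auto
      qed
    qed
    show ?thesis using W1 s1 by (simp add: sc_1 V_in W_in p)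
  next
    case False
    then have ab: "lt a b" and ba: "b \<noteq> a" using lt_total[of b a] by auto
    have m: "mn (p + ev b) = a"
    proof (rule mn_eq)
      show "(p + ev b) a \<noteq> 0" using pa by simp
      show "\<forall>c. (p + ev b) c \<noteq> 0 \<longrightarrow> c \<noteq> a \<longrightarrow> lt a c"
      proof (intro allI impI)
        fix c assume c: "(p + ev b) c \<noteq> 0" "c \<noteq> a"
        show "lt a c"
        proof (cases "c = b")
          case True then show ?thesis using ab by simp
        next
          case False then have "p c \<noteq> 0" using c by (simp add: ev_def)
          then show ?thesis using pmin c(2) by blast
        qed
      qed
    qed
    have d: "dec (p + ev b) = dec p + ev b" unfolding dec_def m a_def[symmetric]
      using ba by (simp add: fun_eq_iff ev_def)
    have W1: "W (p + ev b) = V a \<circ> W (dec p + ev b)" using W_unf[OF fpb pb0] m d by simp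
    have fdp: "fs (dec p)" using fs_dec p by blast
    have s1: "sig (ev b) p = sig (ev b) (dec p) * q b a"
    proof -
      have "sig (ev b) p = sig (ev b) (dec p + ev a)" using pd by simp
      also have "\<dots> = sig (ev b) (dec p) * sig (ev b) (ev a)" by (rule sig_add2) (simp_all add: fs_ev fdp)
      finally show ?thesis using sig_ev_ev[OF ab] by simp
    qed
    show ?thesis
    proof
      fix x assume x: "x \<in> hcarrier H"
      have wx: "W (dec p) x \<in> hcarrier H" using W_in fdp x by blast
      have "V b (W p x) = V b (V a (W (dec p) x))" using Wp by simp
      also have "\<dots> = hscale H (q b a) (V a (V b (W (dec p) x)))" using comm[OF ba wx] .
      also have "V b (W (dec p) x) = hscale H (sig (ev b) (dec p)) (W (dec p + ev b) x)" using IH x by blast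
      also have "hscale H (q b a) (V a (hscale H (sig (ev b) (dec p)) (W (dec p + ev b) x)))
          = hscale H (sig (ev b) p) (W (p + ev b) x)"
      proof -
        have w2: "W (dec p + ev b) x \<in> hcarrier H" using W_in[OF fs_add[OF fdp fs_ev] x] .
        have "hscale H (q b a) (V a (hscale H (sig (ev b) (dec p)) (W (dec p + ev b) x)))
            = hscale H (q b a) (hscale H (sig (ev b) (dec p)) (V a (W (dec p + ev b) x)))"
          using V_sc[OF w2] by simp
        also have "\<dots> = hscale H (q b a * sig (ev b) (dec p)) (V a (W (dec p + ev b) x))"
          using sc_sc[OF V_in[OF w2]] by simp
        also have "V a (W (dec p + ev b) x) = W (p + ev b) x" using W1 by simp
        finally have X: "hscale H (q b a) (V a (hscale H (sig (ev b) (dec p)) (W (dec p + ev b) x)))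
            = hscale H (q b a * sig (ev b) (dec p)) (W (p + ev b) x)" .
        have "sig (ev b) p = q b a * sig (ev b) (dec p)" using s1 by (simp add: mult.commute)
        then show ?thesis using X by simp
      qed
      finally show "V b (W p x) = hscale H (sig (ev b) p) (W (p + ev b) x)" .
    qed
  qed
qed

lemma W_W: assumes n: "fs n" and m: "fs m"
  shows "\<forall>x\<in>hcarrier H. W n (W m x) = hscale H (sig n m) (W (n + m) x)"
proof (rule fs_induct[OF n])
  show "\<forall>x\<in>hcarrier H. W 0 (W m x) = hscale H (sig 0 m) (W (0 + m) x)"
    by (simp add: W_0 sig_0l sc_1 W_in m)
next
  fix n :: "'l \<Rightarrow> nat" assume n: "fs n" "n \<noteq> 0"
    and IH: "\<forall>x\<in>hcarrier H. W (dec n) (W m x) = hscale H (sig (dec n) m) (W (dec n + m) x)"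
  define a where "a = mn n"
  have na: "n a \<noteq> 0" using mn(1)[OF n] unfolding a_def .
  have nmin: "\<And>c. n c \<noteq> 0 \<Longrightarrow> c \<noteq> a \<Longrightarrow> lt a c" using mn(2)[OF n] unfolding a_def .
  have nd: "dec n + ev a = n" using dec_add[OF n] unfolding a_def .
  have fdn: "fs (dec n)" using fs_dec n by blast
  have Wn: "W n = V a \<circ> W (dec n)" using W_unf[OF n] unfolding a_def .
  have s0: "sig (ev a) (dec n) = 1"
  proof (rule sig_ev_low)
    fix c assume "dec n c \<noteq> 0"
    then have "n c \<noteq> 0" by (auto simp: dec_def split: if_splits)
    then have "c = a \<or> lt a c" using nmin by blast
    then show "\<not> lt c a" using lt_asym[of a c] lt_irr[of a] by auto
  qed
  have s1: "sig n m = sig (dec n) m * sig (ev a) m"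
    using sig_add1[OF fdn fs_ev m, of a] nd by simp
  have s2: "sig (ev a) (dec n + m) = sig (ev a) m"
    using sig_add2[OF fs_ev fdn m, of a] s0 by simp
  have e: "dec n + m + ev a = n + m" using nd by (simp add: algebra_simps)
  show "\<forall>x\<in>hcarrier H. W n (W m x) = hscale H (sig n m) (W (n + m) x)"
  proof
    fix x assume x: "x \<in> hcarrier H"
    have w: "W (dec n + m) x \<in> hcarrier H" using W_in fs_add fdn m x by blast
    have "W n (W m x) = V a (W (dec n) (W m x))" using Wn by simp
    also have "\<dots> = V a (hscale H (sig (dec n) m) (W (dec n + m) x))" using IH x by simp
    also have "\<dots> = hscale H (sig (dec n) m) (V a (W (dec n + m) x))" using V_sc w by blast
    also have "V a (W (dec n + m) x) = hscale H (sig (ev a) (dec n + m)) (W (dec n + m + ev a) x)"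
      using V_W[OF fs_add[OF fdn m]] x by blast
    finally have "W n (W m x) = hscale H (sig (dec n) m) (hscale H (sig (ev a) m) (W (n + m) x))"
      using s2 e by simp
    also have "\<dots> = hscale H (sig n m) (W (n + m) x)"
      using sc_sc[OF W_in[OF fs_add[OF n(1) m] x]] s1 by simp
    finally show "W n (W m x) = hscale H (sig n m) (W (n + m) x)" .
  qed
qed

end

lemma fdiff_add: "(n :: 'l \<Rightarrow> nat) \<le> P \<Longrightarrow> P - n + n = P"
  by (simp add: fun_eq_iff le_fun_def)
lemma fdiff_add2: "(n :: 'l \<Rightarrow> nat) \<le> p \<Longrightarrow> p \<le> P \<Longrightarrow> (P - p) + (p - n) = P - n"
  by (simp add: fun_eq_iff le_fun_def)
lemma fadd_diff: "(n :: 'l \<Rightarrow> nat) + m - n = m"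
  by (simp add: fun_eq_iff)
lemma fle_add1: "(n :: 'l \<Rightarrow> nat) \<le> n + m" by (simp add: le_fun_def)
lemma fle_add2: "(m :: 'l \<Rightarrow> nat) \<le> n + m" by (simp add: le_fun_def)

context qsys begin

definition L :: "('l \<Rightarrow> nat) \<Rightarrow> ('l \<Rightarrow> nat) \<Rightarrow> 'h \<Rightarrow> 'h" where
  "L P n h = hscale H (cnj (sig (P - n) n)) (W (P - n) h)"

lemma L_in: "fs P \<Longrightarrow> h \<in> hcarrier H \<Longrightarrow> L P n h \<in> hcarrier H"
  unfolding L_def by (intro sc_in W_in fs_diff)

lemma W_ad: "fs n \<Longrightarrow> x \<in> hcarrier H \<Longrightarrow> y \<in> hcarrier H \<Longrightarrow> W n (hadd H x y) = hadd H (W n x) (W n y)"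
  using W_iso isoH_ad by blast

lemma W_ip: "fs n \<Longrightarrow> x \<in> hcarrier H \<Longrightarrow> y \<in> hcarrier H \<Longrightarrow> hinner H (W n x) (W n y) = hinner H x y"
  using W_iso isoH_ip by blast

lemma L_ad: "fs P \<Longrightarrow> h \<in> hcarrier H \<Longrightarrow> k \<in> hcarrier H \<Longrightarrow> L P n (hadd H h k) = hadd H (L P n h) (L P n k)"
  unfolding L_def by (simp add: W_ad fs_diff sc_ad W_in)

lemma L_sc: "fs P \<Longrightarrow> h \<in> hcarrier H \<Longrightarrow> L P n (hscale H c h) = hscale H c (L P n h)"
  unfolding L_def by (simp add: W_sc fs_diff sc_sc W_in mult.commute)

lemma L_self: "h \<in> hcarrier H \<Longrightarrow> L P P h = h"
proof -
  assume h: "h \<in> hcarrier H"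
  have "P - P = 0" by (simp add: fun_eq_iff)
  then show ?thesis unfolding L_def using h by (simp add: sig_0l W_0 sc_1)
qed

lemma L_ip: "fs P \<Longrightarrow> u \<in> hcarrier H \<Longrightarrow> v \<in> hcarrier H \<Longrightarrow> hinner H (L P n u) (L P n v) = hinner H u v"
  unfolding L_def by (simp add: Hs.ip_sc Hs.ip_sc2 W_in fs_diff sc_in W_ip mult.assoc[symmetric] sig_cnj')

lemma L_trans:
  assumes np: "n \<le> p" and pP: "p \<le> P" and fP: "fs P" and h: "h \<in> hcarrier H"
  shows "L P p (L p n h) = L P n h"
proof -
  define a where "a = P - p"
  define b where "b = p - n"
  have fp: "fs p" using fs_le pP fP by blast
  have fn: "fs n" using fs_le np fp by blast
  have fa: "fs a" and fb: "fs b" using fs_diff fP fp a_def b_def by auto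
  have pbn: "p = b + n" using fdiff_add[OF np] b_def by simp
  have ab: "a + b = P - n" using fdiff_add2[OF np pP] a_def b_def by simp
  have Wb: "W b h \<in> hcarrier H" using W_in fb h by blast
  have "L P p (L p n h) = hscale H (cnj (sig a p)) (W a (hscale H (cnj (sig b n)) (W b h)))"
    unfolding L_def a_def b_def by simp
  also have "\<dots> = hscale H (cnj (sig a p) * cnj (sig b n)) (W a (W b h))"
    using W_sc[OF fa Wb] sc_sc W_in[OF fa Wb] by simp
  also have "W a (W b h) = hscale H (sig a b) (W (a + b) h)" using W_W[OF fa fb] h by blast
  also have "hscale H (cnj (sig a p) * cnj (sig b n)) (hscale H (sig a b) (W (a + b) h))
     = hscale H (cnj (sig a p) * cnj (sig b n) * sig a b) (W (a + b) h)"
    using sc_sc W_in fa fb h fs_add by blast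
  also have "cnj (sig a p) * cnj (sig b n) * sig a b = cnj (sig (P - n) n)"
  proof -
    have s1: "sig a p = sig a b * sig a n" using pbn sig_add2[OF fa fb fn] by simp
    have s2: "sig (P - n) n = sig a n * sig b n" using ab sig_add1[OF fa fb fn] by simp
    have "cnj (sig a p) * cnj (sig b n) * sig a b = (cnj (sig a b) * sig a b) * cnj (sig a n) * cnj (sig b n)"
      using s1 by simp
    also have "\<dots> = cnj (sig (P - n) n)" using s2 sig_cnj by simp
    finally show ?thesis .
  qed
  finally have X: "L P p (L p n h) = hscale H (cnj (sig (P - n) n)) (W (a + b) h)" .
  show ?thesis using X unfolding ab by (simp only: L_def)
qed

end

definition nn :: "('l \<Rightarrow> int) \<Rightarrow> 'l \<Rightarrow> nat" where "nn N = (\<lambda>a. nat (N a))"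

lemma nn_add: "(\<forall>a. 0 \<le> N a) \<Longrightarrow> (\<forall>a. 0 \<le> M a) \<Longrightarrow> nn (N + M) = nn N + nn M"
  by (simp add: nn_def fun_eq_iff nat_add_distrib)

lemma nn_0: "nn 0 = 0" by (simp add: nn_def fun_eq_iff)

context qsys begin

definition Sd :: "(('l \<Rightarrow> int) \<times> 'h) set" where
  "Sd = {x. (\<forall>a. 0 \<le> fst x a) \<and> fs (nn (fst x)) \<and> snd x \<in> hcarrier H}"

definition adD :: "('l \<Rightarrow> int) \<times> 'h \<Rightarrow> ('l \<Rightarrow> int) \<times> 'h \<Rightarrow> ('l \<Rightarrow> int) \<times> 'h" where
  "adD x y = (fst x + fst y, hadd H (L (nn (fst x) + nn (fst y)) (nn (fst x)) (snd x))
                                     (L (nn (fst x) + nn (fst y)) (nn (fst y)) (snd y)))"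

definition scD :: "complex \<Rightarrow> ('l \<Rightarrow> int) \<times> 'h \<Rightarrow> ('l \<Rightarrow> int) \<times> 'h" where
  "scD c x = (fst x, hscale H c (snd x))"

definition zrD :: "('l \<Rightarrow> int) \<times> 'h" where "zrD = (0, hzero H)"

definition ipD :: "('l \<Rightarrow> int) \<times> 'h \<Rightarrow> ('l \<Rightarrow> int) \<times> 'h \<Rightarrow> complex" where
  "ipD x y = hinner H (L (nn (fst x) + nn (fst y)) (nn (fst x)) (snd x))
                      (L (nn (fst x) + nn (fst y)) (nn (fst y)) (snd y))"

lemma Sd_D: "x \<in> Sd \<Longrightarrow> (\<forall>a. 0 \<le> fst x a) \<and> fs (nn (fst x)) \<and> snd x \<in> hcarrier H"
  by (simp add: Sd_def)

lemma L_lift: assumes "n \<le> P" "P \<le> Q" "fs Q" "h \<in> hcarrier H"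
  shows "L Q n h = L Q P (L P n h)"
  using L_trans[OF assms] by simp

lemma ipD_P:
  assumes x: "x \<in> Sd" and y: "y \<in> Sd" and fP: "fs P" and xP: "nn (fst x) \<le> P" and yP: "nn (fst y) \<le> P"
  shows "ipD x y = hinner H (L P (nn (fst x)) (snd x)) (L P (nn (fst y)) (snd y))"
proof -
  let ?n = "nn (fst x)" and ?m = "nn (fst y)"
  define Q where "Q = P + (?n + ?m)"
  have fn: "fs ?n" and fm: "fs ?m" and hx: "snd x \<in> hcarrier H" and hy: "snd y \<in> hcarrier H"
    using x y Sd_D by auto
  have fQ: "fs Q" unfolding Q_def using fP fn fm fs_add by blast
  have PQ: "P \<le> Q" and sQ: "?n + ?m \<le> Q" unfolding Q_def by (simp_all add: le_fun_def)
  have fs: "fs (?n + ?m)" using fn fm fs_add by blast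
  have "ipD x y = hinner H (L Q (?n + ?m) (L (?n + ?m) ?n (snd x))) (L Q (?n + ?m) (L (?n + ?m) ?m (snd y)))"
    unfolding ipD_def by (rule L_ip[symmetric]) (simp_all add: fQ L_in fs hx hy)
  also have "\<dots> = hinner H (L Q ?n (snd x)) (L Q ?m (snd y))"
    using L_lift[OF fle_add1 sQ fQ hx] L_lift[OF fle_add2 sQ fQ hy] by simp
  also have "\<dots> = hinner H (L Q P (L P ?n (snd x))) (L Q P (L P ?m (snd y)))"
    using L_lift[OF xP PQ fQ hx] L_lift[OF yP PQ fQ hy] by simp
  also have "\<dots> = hinner H (L P ?n (snd x)) (L P ?m (snd y))"
    by (rule L_ip) (simp_all add: fQ L_in fP hx hy)
  finally show ?thesis .
qed

lemma adD_in: assumes x: "x \<in> Sd" and y: "y \<in> Sd" shows "adD x y \<in> Sd"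
proof -
  have px: "\<forall>a. 0 \<le> fst x a" and fx: "fs (nn (fst x))" and hx: "snd x \<in> hcarrier H" using Sd_D[OF x] by auto
  have py: "\<forall>a. 0 \<le> fst y a" and fy: "fs (nn (fst y))" and hy: "snd y \<in> hcarrier H" using Sd_D[OF y] by auto
  have e: "nn (fst x + fst y) = nn (fst x) + nn (fst y)" by (rule nn_add[OF px py])
  have fs: "fs (nn (fst x) + nn (fst y))" by (rule fs_add[OF fx fy])
  have 1: "\<forall>a. 0 \<le> fst (adD x y) a" using px py by (simp add: adD_def)
  have 2: "fs (nn (fst (adD x y)))" using e fs by (simp add: adD_def)
  have 3: "snd (adD x y) \<in> hcarrier H" unfolding adD_def snd_conv
    by (rule ad_in; rule L_in[OF fs]) (simp_all add: hx hy)
  show ?thesis using 1 2 3 by (simp add: Sd_def)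
qed

lemma scD_in: assumes x: "x \<in> Sd" shows "scD c x \<in> Sd"
  using Sd_D[OF x] sc_in by (simp add: Sd_def scD_def)

lemma D_pre: "preH Sd adD scD zrD ipD"
proof
  show "zrD \<in> Sd" by (simp add: Sd_def zrD_def nn_0 fs_0 Hs.zr_in)
next
  fix x y assume x: "x \<in> Sd" and y: "y \<in> Sd"
  then show "adD x y \<in> Sd" by (rule adD_in)
next
  fix a x assume x: "x \<in> Sd"
  then show "scD a x \<in> Sd" by (rule scD_in)
next
  fix x y w assume x: "x \<in> Sd" and y: "y \<in> Sd" and w: "w \<in> Sd"
  let ?n = "nn (fst x)" and ?m = "nn (fst y)" and ?r = "nn (fst w)"
  have fn: "fs ?n" and fm: "fs ?m" and fr: "fs ?r" and hx: "snd x \<in> hcarrier H"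
    and hy: "snd y \<in> hcarrier H" and hw: "snd w \<in> hcarrier H"
    and px: "\<forall>a. 0 \<le> fst x a" and py: "\<forall>a. 0 \<le> fst y a"
    using x y w Sd_D by auto
  let ?s = "?n + ?m" and ?P = "?n + ?m + ?r"
  have fs: "fs ?s" and fP: "fs ?P" using fn fm fr fs_add by blast+
  have xy: "adD x y \<in> Sd" using x y by (rule adD_in)
  have nxy: "nn (fst (adD x y)) = ?s" unfolding adD_def using px py by (simp add: nn_add)
  have "ipD (adD x y) w = hinner H (L ?P ?s (snd (adD x y))) (L ?P ?r (snd w))"
    using ipD_P[OF xy w fP] nxy by (simp add: le_fun_def)
  also have "L ?P ?s (snd (adD x y)) = hadd H (L ?P ?n (snd x)) (L ?P ?m (snd y))"
  proof -
    have "L ?P ?s (snd (adD x y)) = hadd H (L ?P ?s (L ?s ?n (snd x))) (L ?P ?s (L ?s ?m (snd y)))"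
      unfolding adD_def by (simp add: L_ad fP L_in fs hx hy)
    also have "\<dots> = hadd H (L ?P ?n (snd x)) (L ?P ?m (snd y))"
      using L_trans[OF fle_add1 fle_add1 fP hx] L_trans[OF fle_add2 fle_add1 fP hy] by simp
    finally show ?thesis .
  qed
  also have "hinner H (hadd H (L ?P ?n (snd x)) (L ?P ?m (snd y))) (L ?P ?r (snd w))
     = hinner H (L ?P ?n (snd x)) (L ?P ?r (snd w)) + hinner H (L ?P ?m (snd y)) (L ?P ?r (snd w))"
    by (rule Hs.ip_add) (simp_all add: L_in fP hx hy hw)
  also have "hinner H (L ?P ?n (snd x)) (L ?P ?r (snd w)) = ipD x w"
    by (rule ipD_P[symmetric]) (simp_all add: x w fP le_fun_def)
  also have "hinner H (L ?P ?m (snd y)) (L ?P ?r (snd w)) = ipD y w"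
    by (rule ipD_P[symmetric]) (simp_all add: y w fP le_fun_def)
  finally show "ipD (adD x y) w = ipD x w + ipD y w" .
next
  fix a x y assume x: "x \<in> Sd" and y: "y \<in> Sd"
  have fx: "fs (nn (fst x))" and hx: "snd x \<in> hcarrier H" using Sd_D[OF x] by auto
  have fy: "fs (nn (fst y))" and hy: "snd y \<in> hcarrier H" using Sd_D[OF y] by auto
  have fs: "fs (nn (fst x) + nn (fst y))" by (rule fs_add[OF fx fy])
  show "ipD (scD a x) y = a * ipD x y"
    unfolding ipD_def scD_def fst_conv snd_conv L_sc[OF fs hx]
    by (rule Hs.ip_sc) (simp_all add: L_in fs hx hy)
next
  fix x y assume x: "x \<in> Sd" and y: "y \<in> Sd"
  have fx: "fs (nn (fst x))" and hx: "snd x \<in> hcarrier H" using Sd_D[OF x] by auto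
  have fy: "fs (nn (fst y))" and hy: "snd y \<in> hcarrier H" using Sd_D[OF y] by auto
  have fs: "fs (nn (fst x) + nn (fst y))" by (rule fs_add[OF fx fy])
  have c: "nn (fst y) + nn (fst x) = nn (fst x) + nn (fst y)" by (simp add: add.commute)
  show "ipD x y = cnj (ipD y x)"
    unfolding ipD_def c by (rule Hs.ip_sym) (simp_all add: L_in fs hx hy)
next
  fix x assume x: "x \<in> Sd"
  have fx: "fs (nn (fst x))" and hx: "snd x \<in> hcarrier H" using Sd_D[OF x] by auto
  have fs: "fs (nn (fst x) + nn (fst x))" by (rule fs_add[OF fx fx])
  show "0 \<le> Re (ipD x x)" unfolding ipD_def by (rule Hs.ip_pos) (simp_all add: L_in fs hx)
next
  fix x assume x: "x \<in> Sd"
  let ?n = "nn (fst x)"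
  have fn: "fs ?n" and hx: "snd x \<in> hcarrier H" using x Sd_D by auto
  have Lz: "L ?n 0 (hzero H) \<in> hcarrier H" using L_in fn Hs.zr_in by blast
  have "Hs.nrm (L ?n 0 (hzero H)) = 0"
  proof -
    have "Hs.nrm (L ?n 0 (hzero H)) ^ 2 = Re (hinner H (L ?n 0 (hzero H)) (L ?n 0 (hzero H)))"
      using Hs.nrm_sq Lz by blast
    also have "\<dots> = 0" using L_ip[OF fn Hs.zr_in Hs.zr_in] Hs.ip_zr[OF Hs.zr_in] by simp
    finally show ?thesis by simp
  qed
  then have "hinner H (L ?n 0 (hzero H)) (L ?n ?n (snd x)) = 0"
    using Hs.nrm_zero_iff[OF Lz] L_in fn hx by blast
  then show "ipD zrD x = 0" unfolding ipD_def zrD_def by (simp add: nn_0)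
qed

end

definition ei :: "'l \<Rightarrow> 'l \<Rightarrow> int" where "ei a = (\<lambda>b. if b = a then 1 else 0)"
lemma nn_ei: "nn (ei a) = ev a" by (simp add: nn_def ei_def ev_def fun_eq_iff)

context qsys begin

sublocale Dp: preH Sd adD scD zrD ipD by (rule D_pre)

lemma sig_ne0: "sig n m \<noteq> 0" using sig_norm[of n m] by auto
lemma sig_cnj_inv: "cnj (sig n m) = inverse (sig n m)"
  using sig_cnj[of n m] sig_ne0[of n m] by (simp add: field_simps)

definition lam :: "'l \<Rightarrow> ('l \<Rightarrow> nat) \<Rightarrow> complex" where
  "lam a n = sig n (ev a) * cnj (sig (ev a) n)"

lemma lam_inv: "lam a n = sig n (ev a) * inverse (sig (ev a) n)"
  by (simp add: lam_def sig_cnj_inv)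

lemma lam_norm: "cmod (lam a n) = 1" by (simp add: lam_def norm_mult sig_norm)
lemma lam_cnj: "lam a n * cnj (lam a n) = 1" using unimod[OF lam_norm] .
lemma lam_cnj': "cnj (lam a n) * lam a n = 1" using unimod'[OF lam_norm] .
lemma lam_0: "lam a 0 = 1" by (simp add: lam_def sig_0l sig_0r)

definition TD :: "'l \<Rightarrow> ('l \<Rightarrow> int) \<times> 'h \<Rightarrow> ('l \<Rightarrow> int) \<times> 'h" where
  "TD a x = (fst x, hscale H (lam a (nn (fst x))) (V a (snd x)))"

lemma TD_in: assumes x: "x \<in> Sd" shows "TD a x \<in> Sd"
proof -
  have p: "\<forall>b. 0 \<le> fst x b" and f: "fs (nn (fst x))" and h: "snd x \<in> hcarrier H" using Sd_D[OF x] by auto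
  have h2: "hscale H (lam a (nn (fst x))) (V a (snd x)) \<in> hcarrier H" by (rule sc_in[OF V_in[OF h]])
  show ?thesis unfolding Sd_def TD_def using p f h2 by simp
qed

lemma TL: assumes fP: "fs P" and nP: "n \<le> P" and h: "h \<in> hcarrier H"
  shows "L P n (hscale H (lam a n) (V a h)) = hscale H (lam a P) (V a (L P n h))"
proof -
  define m where "m = P - n"
  have fn: "fs n" using fs_le nP fP by blast
  have fm: "fs m" using fs_diff fP m_def by blast
  have Pmn: "P = m + n" using fdiff_add[OF nP] m_def by simp
  have Vh: "V a h \<in> hcarrier H" using V_in h by blast
  have Wh: "W m h \<in> hcarrier H" using W_in fm h by blast
  have Wme: "W (m + ev a) h \<in> hcarrier H" using W_in fs_add[OF fm fs_ev] h by blast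
  have "L P n (hscale H (lam a n) (V a h)) = hscale H (cnj (sig m n)) (W m (hscale H (lam a n) (V a h)))"
    unfolding L_def m_def ..
  also have "\<dots> = hscale H (cnj (sig m n) * lam a n) (W m (V a h))"
    using W_sc[OF fm Vh] sc_sc[OF W_in[OF fm Vh]] by simp
  also have "W m (V a h) = hscale H (sig m (ev a)) (W (m + ev a) h)"
    using W_W[OF fm fs_ev] h W_ev by metis
  also have "hscale H (cnj (sig m n) * lam a n) (hscale H (sig m (ev a)) (W (m + ev a) h))
     = hscale H (cnj (sig m n) * lam a n * sig m (ev a)) (W (m + ev a) h)"
    using sc_sc[OF Wme] by simp
  finally have LHS: "L P n (hscale H (lam a n) (V a h)) = hscale H (cnj (sig m n) * lam a n * sig m (ev a)) (W (m + ev a) h)" .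
  have "V a (L P n h) = V a (hscale H (cnj (sig m n)) (W m h))" unfolding L_def m_def ..
  also have "\<dots> = hscale H (cnj (sig m n)) (V a (W m h))" using V_sc[OF Wh] .
  also have "V a (W m h) = hscale H (sig (ev a) m) (W (m + ev a) h)" using V_W[OF fm] h by blast
  also have "hscale H (cnj (sig m n)) (hscale H (sig (ev a) m) (W (m + ev a) h))
     = hscale H (cnj (sig m n) * sig (ev a) m) (W (m + ev a) h)" using sc_sc[OF Wme] by simp
  finally have R: "hscale H (lam a P) (V a (L P n h)) = hscale H (lam a P * (cnj (sig m n) * sig (ev a) m)) (W (m + ev a) h)"
    using sc_sc[OF Wme] by simp
  have s1: "sig P (ev a) = sig m (ev a) * sig n (ev a)" using Pmn sig_add1[OF fm fn fs_ev] by simp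
  have s2: "sig (ev a) P = sig (ev a) m * sig (ev a) n" using Pmn sig_add2[OF fs_ev fm fn] by simp
  have "cnj (sig m n) * lam a n * sig m (ev a) = lam a P * (cnj (sig m n) * sig (ev a) m)"
    unfolding lam_inv s1 s2 using sig_ne0[of "ev a" m] sig_ne0[of "ev a" n]
    by (simp add: field_simps)
  then have ph: "cnj (sig m n) * lam a n * sig m (ev a) = lam a P * (cnj (sig m n) * sig (ev a) m)" .
  show ?thesis by (simp only: LHS R ph)
qed

lemma TD_ip: assumes x: "x \<in> Sd" and y: "y \<in> Sd" shows "ipD (TD a x) (TD a y) = ipD x y"
proof -
  let ?n = "nn (fst x)" and ?m = "nn (fst y)"
  have fx: "fs ?n" and hx: "snd x \<in> hcarrier H" using Sd_D[OF x] by auto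
  have fy: "fs ?m" and hy: "snd y \<in> hcarrier H" using Sd_D[OF y] by auto
  have fs: "fs (?n + ?m)" by (rule fs_add[OF fx fy])
  have Lx: "L (?n + ?m) ?n (snd x) \<in> hcarrier H" and Ly: "L (?n + ?m) ?m (snd y) \<in> hcarrier H"
    using L_in fs hx hy by blast+
  have "ipD (TD a x) (TD a y) = hinner H (hscale H (lam a (?n + ?m)) (V a (L (?n + ?m) ?n (snd x))))
      (hscale H (lam a (?n + ?m)) (V a (L (?n + ?m) ?m (snd y))))"
    unfolding ipD_def TD_def fst_conv snd_conv
    using TL[OF fs fle_add1 hx] TL[OF fs fle_add2 hy] by simp
  also have "\<dots> = (lam a (?n + ?m) * cnj (lam a (?n + ?m))) * hinner H (V a (L (?n + ?m) ?n (snd x))) (V a (L (?n + ?m) ?m (snd y)))"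
    using Lx Ly V_in by (simp add: Hs.ip_sc Hs.ip_sc2 sc_in)
  also have "\<dots> = hinner H (L (?n + ?m) ?n (snd x)) (L (?n + ?m) ?m (snd y))"
    using isoH_ip[OF isoH_V Lx Ly] lam_cnj by simp
  finally show ?thesis unfolding ipD_def .
qed

lemma TD_iso: "Dp.isoD (TD a)"
  unfolding Dp.isoD_def using TD_in TD_ip by blast

lemma TD_sj: "\<forall>x\<in>Sd. \<exists>y\<in>Sd. Dp.nrm (Dp.dif (TD a y) x) = 0"
proof
  fix x assume x: "x \<in> Sd"
  let ?n = "nn (fst x)" and ?e = "ev a"
  have px: "\<forall>b. 0 \<le> fst x b" and fx: "fs ?n" and hx: "snd x \<in> hcarrier H" using Sd_D[OF x] by auto
  define mu where "mu = cnj (sig ?e ?n) * cnj (lam a (?n + ?e))"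
  define y where "y = (fst x + ei a, hscale H mu (snd x))"
  have pe: "\<forall>b. 0 \<le> ei a b" by (simp add: ei_def)
  have ny: "nn (fst y) = ?n + ?e" unfolding y_def using nn_add[OF px pe] nn_ei by simp
  have fne: "fs (?n + ?e)" by (rule fs_add[OF fx fs_ev])
  have yS: "y \<in> Sd" unfolding Sd_def using ny fne px hx sc_in by (simp add: y_def ei_def)
  have TDy: "TD a y = (fst x + ei a, hscale H (cnj (sig ?e ?n)) (V a (snd x)))"
  proof -
    have "snd (TD a y) = hscale H (lam a (?n + ?e)) (hscale H mu (V a (snd x)))"
      unfolding TD_def ny by (simp add: y_def V_sc hx)
    also have "\<dots> = hscale H (lam a (?n + ?e) * mu) (V a (snd x))" using sc_sc V_in hx by blast
    also have "lam a (?n + ?e) * mu = cnj (sig ?e ?n)" unfolding mu_def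
      using lam_cnj[of a "?n + ?e"] by (simp add: algebra_simps)
    finally show ?thesis by (simp add: TD_def y_def prod_eq_iff)
  qed
  have TyS: "TD a y \<in> Sd" using TD_in yS by blast
  have "Dp.nrm (Dp.dif (TD a y) x) = 0"
  proof (rule Dp.nrm_dif_zero[OF TyS x])
    fix t assume t: "t \<in> Sd"
    let ?r = "nn (fst t)"
    have ft: "fs ?r" and ht: "snd t \<in> hcarrier H" using Sd_D[OF t] by auto
    let ?P = "?n + ?e + ?r"
    have fP: "fs ?P" using fne ft fs_add by blast
    have nTy: "nn (fst (TD a y)) = ?n + ?e" using ny by (simp add: TD_def)
    have "ipD (TD a y) t = hinner H (L ?P (?n + ?e) (hscale H (cnj (sig ?e ?n)) (V a (snd x)))) (L ?P ?r (snd t))"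
      unfolding ipD_def nTy using TDy by simp
    also have "hscale H (cnj (sig ?e ?n)) (V a (snd x)) = L (?n + ?e) ?n (snd x)"
      unfolding L_def fadd_diff W_ev ..
    also have "L ?P (?n + ?e) (L (?n + ?e) ?n (snd x)) = L ?P ?n (snd x)"
      by (rule L_trans) (simp_all add: le_fun_def fP hx)
    also have "hinner H (L ?P ?n (snd x)) (L ?P ?r (snd t)) = ipD x t"
      by (rule ipD_P[symmetric]) (simp_all add: x t fP le_fun_def)
    finally show "ipD (TD a y) t = ipD x t" .
  qed
  then show "\<exists>y\<in>Sd. Dp.nrm (Dp.dif (TD a y) x) = 0" using yS by blast
qed

lemma TD_comm: assumes ab: "a \<noteq> b" and x: "x \<in> Sd"
  shows "TD a (TD b x) = scD (q a b) (TD b (TD a x))"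
proof -
  let ?n = "nn (fst x)"
  have hx: "snd x \<in> hcarrier H" using Sd_D[OF x] by auto
  have Vb: "V b (snd x) \<in> hcarrier H" and Va: "V a (snd x) \<in> hcarrier H" using V_in hx by auto
  have "snd (TD a (TD b x)) = hscale H (lam a ?n) (hscale H (lam b ?n) (V a (V b (snd x))))"
    by (simp add: TD_def V_sc Vb)
  also have "V a (V b (snd x)) = hscale H (q a b) (V b (V a (snd x)))" by (rule comm[OF ab hx])
  also have "hscale H (lam a ?n) (hscale H (lam b ?n) (hscale H (q a b) (V b (V a (snd x)))))
      = hscale H (lam a ?n * lam b ?n * q a b) (V b (V a (snd x)))"
    using sc_sc V_in Va by (simp add: sc_in mult.assoc)
  finally have 1: "snd (TD a (TD b x)) = hscale H (lam a ?n * lam b ?n * q a b) (V b (V a (snd x)))" .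
  have "snd (scD (q a b) (TD b (TD a x))) = hscale H (q a b) (hscale H (lam b ?n) (hscale H (lam a ?n) (V b (V a (snd x)))))"
    by (simp add: TD_def scD_def V_sc Va)
  also have "\<dots> = hscale H (lam a ?n * lam b ?n * q a b) (V b (V a (snd x)))"
    using sc_sc V_in Va by (simp add: sc_in algebra_simps)
  finally have 2: "snd (scD (q a b) (TD b (TD a x))) = hscale H (lam a ?n * lam b ?n * q a b) (V b (V a (snd x)))" .
  have 3: "fst (TD a (TD b x)) = fst (scD (q a b) (TD b (TD a x)))" by (simp add: TD_def scD_def)
  show ?thesis using 1 2 3 by (simp add: prod_eq_iff)
qed

theorem main:
  shows "\<exists>(K :: (nat \<Rightarrow> ('l \<Rightarrow> int) \<times> 'h) hspace) \<iota> U.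
           is_chilbert K \<and> hisometry_map H K \<iota> \<and>
           (\<forall>\<alpha>. hunitary K (U \<alpha>)) \<and>
           (\<forall>\<alpha> \<beta>. \<alpha> \<noteq> \<beta> \<longrightarrow> (\<forall>y\<in>hcarrier K.
              U \<alpha> (U \<beta> y) = hscale K (q \<alpha> \<beta>) (U \<beta> (U \<alpha> y)))) \<and>
           (\<forall>\<alpha>. \<forall>x\<in>hcarrier H. U \<alpha> (\<iota> x) = \<iota> (V \<alpha> x))"
proof (rule Dp.generic_main[where T = TD and e = "\<lambda>x. (0, x)"])
  show "Dp.isoD (TD a)" for a by (rule TD_iso)
  show "\<forall>x\<in>Sd. \<exists>y\<in>Sd. Dp.nrm (Dp.dif (TD a y) x) = 0" for a by (rule TD_sj)
  show "TD a (TD b x) = scD (q a b) (TD b (TD a x))" if "a \<noteq> b" "x \<in> Sd" for a b x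
    using TD_comm that by blast
  show "(0, x) \<in> Sd" if "x \<in> hcarrier H" for x using that by (simp add: Sd_def nn_0 fs_0)
  show "(0, hadd H x y) = adD (0, x) (0, y)" if "x \<in> hcarrier H" "y \<in> hcarrier H" for x y
    using that by (simp add: adD_def nn_0 L_self)
  show "(0, hscale H a x) = scD a (0, x)" if "x \<in> hcarrier H" for a x by (simp add: scD_def)
  show "ipD (0, x) (0, x) = hinner H x x" if "x \<in> hcarrier H" for x
    using that by (simp add: ipD_def nn_0 L_self)
  show "TD a (0, x) = (0, V a x)" if "x \<in> hcarrier H" for a x
    using that by (simp add: TD_def nn_0 lam_0 sc_1 V_in)
qed

end

theorem corollary5p4:
  fixes H :: "'h hspace"
    and q :: "'l \<Rightarrow> 'l \<Rightarrow> complex"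
    and V :: "'l \<Rightarrow> 'h \<Rightarrow> 'h"
  assumes "is_chilbert H"
    and "\<And>\<alpha> \<beta>. \<alpha> \<noteq> \<beta> \<Longrightarrow> cmod (q \<alpha> \<beta>) = 1"
    and "\<And>\<alpha> \<beta>. \<alpha> \<noteq> \<beta> \<Longrightarrow> q \<alpha> \<beta> = inverse (q \<beta> \<alpha>)"
    and "\<And>\<alpha>. hisometry H (V \<alpha>)"
    and "\<And>\<alpha> \<beta> x. \<alpha> \<noteq> \<beta> \<Longrightarrow> x \<in> hcarrier H \<Longrightarrow>
           V \<alpha> (V \<beta> x) = hscale H (q \<alpha> \<beta>) (V \<beta> (V \<alpha> x))"
  shows "\<exists>(K :: (nat \<Rightarrow> ('l \<Rightarrow> int) \<times> 'h) hspace) \<iota> U.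
           is_chilbert K \<and> hisometry_map H K \<iota> \<and>
           (\<forall>\<alpha>. hunitary K (U \<alpha>)) \<and>
           (\<forall>\<alpha> \<beta>. \<alpha> \<noteq> \<beta> \<longrightarrow> (\<forall>y\<in>hcarrier K.
              U \<alpha> (U \<beta> y) = hscale K (q \<alpha> \<beta>) (U \<beta> (U \<alpha> y)))) \<and>
           (\<forall>\<alpha>. \<forall>x\<in>hcarrier H. U \<alpha> (\<iota> x) = \<iota> (V \<alpha> x))"
proof -
  have Q: "qsys H q V" by (rule qsys.intro[OF assms(1) assms(2) assms(4) assms(5)])
  show ?thesis by (rule qsys.main[OF Q])
qed

end
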